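(* Let $n\geq1$ and let $x_1>x_2>\cdots>x_n$ be nonzero integers. For a virtual knot diagram $K$ let $C_{(x_1,\dots,x_n)}$ be the set of $n$-tuples $(c_1,\dots,c_n)$ of chords of $G(K)$ with $\mathrm{Ind}(c_i)=x_i$ for all $i$, and set $$a_{(x_1,\dots,x_n)}(K)=\sum_{(c_1,\dots,c_n)\in C_{(x_1,\dots,x_n)}}\prod_{i=1}^n w(c_i).$$ Then $a_{(x_1,\dots,x_n)}$ is a virtual knot invariant and it is a finite type invariant of degree exactly $n$.
   Context: Virtual knot diagrams, real crossings with writhes $w(c)\in\{\pm1\}$, generalized Reidemeister moves ($\Omega_1,\Omega_2,\Omega_3$, virtual moves, mixed move $\Omega_3^v$). Gauss diagram $G(K)$: counterclockwise circle with, for each real crossing $c$, a chord directed from the overcrossing preimage to the undercrossing preimage, signed $w(c)$. A chord $d$ crosses $c$ if their endpoints interlace; viewing $c$ as an arrow in the disk, $d$ crosses $c$ from left to right if its tail is left of $c$ and head right of $c$, else from right to left. With $r_\pm(c), l_\pm(c)$ the numbers of chords of sign $\pm$ crossing $c$ from left to right, resp. right to left, $\mathrm{Ind}(c)=r_+(c)-r_-(c)-l_+(c)+l_-(c)$. Finite type invariants: a singular virtual knot diagram is a virtual knot diagram some of whose crossings are singular (transverse double points), considered up to generalized and singular Reidemeister moves. An invariant $f$ of virtual knots with values in an abelian group is extended to singular virtual knots by $f^{(0)}=f$ and $f^{(m)}(K)=f^{(m-1)}(K_+)-f^{(m-1)}(K_-)$, where $K_\pm$ resolves one singular crossing into a positive/negative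 crossing; equivalently for $K$ with singular crossings $c_1,\dots,c_m$, $f^{(m)}(K)=\sum_{\sigma\in\{0,1\}^m}(-1)^{|\sigma|}f(K_\sigma)$ where $K_\sigma$ resolves $c_i$ positively if $\sigma_i=0$ and negatively if $\sigma_i=1$. $f$ is a finite type invariant of degree $n$ if $f^{(n+1)}$ vanishes on all singular virtual knots with $n+1$ singular crossings, but $f^{(n)}(K)\neq0$ for some singular virtual knot $K$ with $n$ singular crossings. *)

theory Defs
  imports Main
begin

text \<open>Virtual knots are modelled by Gauss diagrams (Goussarov--Polyak--Viro).
  A Gauss diagram is a word (read along the counterclockwise circle, up to rotation)
  whose letters are chord endpoints: (i, True) is the tail (overcrossing preimage)
  of chord i and (i, False) its head (undercrossing preimage); the second component
  gives the sign (writhe) of each chord.\<close>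

type_synonym gauss = "(nat \<times> bool) list \<times> (nat \<Rightarrow> int)"

definition labels :: "gauss \<Rightarrow> nat set" where
  "labels D = fst ` set (fst D)"

definition gauss_wf :: "gauss \<Rightarrow> bool" where
  "gauss_wf D \<longleftrightarrow> distinct (fst D) \<and>
     (\<forall>i \<in> labels D. (i, True) \<in> set (fst D) \<and> (i, False) \<in> set (fst D)
        \<and> (snd D i = 1 \<or> snd D i = -1))"

definition agree :: "(nat \<Rightarrow> int) \<Rightarrow> (nat \<Rightarrow> int) \<Rightarrow> (nat \<times> bool) list \<Rightarrow> bool" where
  "agree s s' w \<longleftrightarrow> (\<forall>i \<in> fst ` set w. s' i = s i)"

definition sgnb :: "bool \<Rightarrow> int" where
  "sgnb b = (if b then 1 else -1)"

text \<open>One generalized Reidemeister step on Gauss diagrams (in the "insertion" direction;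
  virtual moves and the mixed move do not change the Gauss diagram). Rotation of the word
  and renaming of chords do not change the Gauss diagram either.\<close>

definition rot_step :: "gauss \<Rightarrow> gauss \<Rightarrow> bool" where
  "rot_step D D' \<longleftrightarrow> fst D' = rotate1 (fst D) \<and> agree (snd D) (snd D') (fst D)"

definition relabel_step :: "gauss \<Rightarrow> gauss \<Rightarrow> bool" where
  "relabel_step D D' \<longleftrightarrow> (\<exists>\<pi>. inj_on \<pi> (labels D) \<and>
      fst D' = map (\<lambda>(i, b). (\<pi> i, b)) (fst D) \<and>
      (\<forall>i \<in> labels D. snd D' (\<pi> i) = snd D i))"

definition R1_step :: "gauss \<Rightarrow> gauss \<Rightarrow> bool" where
  "R1_step D D' \<longleftrightarrow> (\<exists>u v i b. fst D = u @ v \<and>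
      fst D' = u @ [(i, b), (i, \<not> b)] @ v \<and> agree (snd D) (snd D') (fst D))"

definition R2_step :: "gauss \<Rightarrow> gauss \<Rightarrow> bool" where
  "R2_step D D' \<longleftrightarrow> (\<exists>u v x i j k l. fst D = u @ v @ x \<and>
      ((k, l) = (i, j) \<or> (k, l) = (j, i)) \<and>
      fst D' = u @ [(i, True), (j, True)] @ v @ [(k, False), (l, False)] @ x \<and>
      snd D' i = - snd D' j \<and> agree (snd D) (snd D') (fst D))"

text \<open>Third move: strands T (top), M (middle), B (bottom); chord p = T over M,
  q = T over B, r = M over B. Each strand contributes a segment of two adjacent
  endpoints; the move reverses every segment. The admissibility condition on the
  orders (eT, eM, eB) and signs is the one realised by three lines in the plane.\<close>

definition segT :: "bool \<Rightarrow> nat \<Rightarrow> nat \<Rightarrow> (nat \<times> bool) list" where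
  "segT e p q = (if e then [(q, True), (p, True)] else [(p, True), (q, True)])"
definition segM :: "bool \<Rightarrow> nat \<Rightarrow> nat \<Rightarrow> (nat \<times> bool) list" where
  "segM e p r = (if e then [(p, False), (r, True)] else [(r, True), (p, False)])"
definition segB :: "bool \<Rightarrow> nat \<Rightarrow> nat \<Rightarrow> (nat \<times> bool) list" where
  "segB e q r = (if e then [(r, False), (q, False)] else [(q, False), (r, False)])"

definition R3_step :: "gauss \<Rightarrow> gauss \<Rightarrow> bool" where
  "R3_step D D' \<longleftrightarrow> (\<exists>u v x y A1 A2 A3 p q r eT eM eB.
      (let ST = segT eT p q; SM = segM eM p r; SB = segB eB q r in
        (A1, A2, A3) \<in> {(ST, SM, SB), (ST, SB, SM), (SM, ST, SB), (SM, SB, ST),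
                         (SB, ST, SM), (SB, SM, ST)}) \<and>
      fst D = u @ A1 @ v @ A2 @ x @ A3 @ y \<and>
      fst D' = u @ rev A1 @ v @ rev A2 @ x @ rev A3 @ y \<and>
      snd D p * sgnb eT * sgnb eM = - snd D q * sgnb eT * sgnb eB \<and>
      - snd D q * sgnb eT * sgnb eB = snd D r * sgnb eM * sgnb eB \<and>
      agree (snd D) (snd D') (fst D))"

definition gstep :: "gauss \<Rightarrow> gauss \<Rightarrow> bool" where
  "gstep D D' \<longleftrightarrow> rot_step D D' \<or> relabel_step D D' \<or> R1_step D D' \<or>
     R2_step D D' \<or> R3_step D D'"

definition knot_invariant :: "(gauss \<Rightarrow> 'a) \<Rightarrow> bool" where
  "knot_invariant f \<longleftrightarrow>
     (\<forall>D D'. gauss_wf D \<longrightarrow> gauss_wf D' \<longrightarrow> gstep D D' \<longrightarrow> f D = f D')"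

definition pos :: "(nat \<times> bool) list \<Rightarrow> nat \<times> bool \<Rightarrow> nat" where
  "pos w a = (THE k. k < length w \<and> w ! k = a)"

text \<open>Position k lies on the right of chord c (the arc traversed counterclockwise
  from the tail of c to its head).\<close>
definition right_of :: "(nat \<times> bool) list \<Rightarrow> nat \<Rightarrow> nat \<Rightarrow> bool" where
  "right_of w c k \<longleftrightarrow> (let t = pos w (c, True); h = pos w (c, False) in
      if t < h then t < k \<and> k < h else t < k \<or> k < h)"

definition Ind :: "gauss \<Rightarrow> nat \<Rightarrow> int" where
  "Ind D c = (\<Sum>d \<in> labels D - {c}.
      (let R = right_of (fst D) c; td = pos (fst D) (d, True); hd = pos (fst D) (d, False) in
        if \<not> R td \<and> R hd then snd D d
        else if R td \<and> \<not> R hd then - snd D d else 0))"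

definition chord_tuples :: "int list \<Rightarrow> gauss \<Rightarrow> nat list set" where
  "chord_tuples xs D = {cs. length cs = length xs \<and>
      (\<forall>i < length xs. cs ! i \<in> labels D \<and> Ind D (cs ! i) = xs ! i)}"

definition a_inv :: "int list \<Rightarrow> gauss \<Rightarrow> int" where
  "a_inv xs D = (\<Sum>cs \<in> chord_tuples xs D. \<Prod>i < length xs. snd D (cs ! i))"

text \<open>A singular diagram with singular crossings S is given by
  a Gauss diagram D and a set S of its chords; resolving crossing c with sign eps is
  a crossing change (reverse the chord, negate the sign) if needed.\<close>

definition resolve :: "gauss \<Rightarrow> nat set \<Rightarrow> nat set \<Rightarrow> gauss" where
  "resolve D S T = (let tgt = (\<lambda>i. if i \<in> T then -1 else (1::int)) in
     (map (\<lambda>(i, b). if i \<in> S \<and> snd D i \<noteq> tgt i then (i, \<not> b) else (i, b)) (fst D),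
      \<lambda>i. if i \<in> S then tgt i else snd D i))"

definition sing_deriv :: "(gauss \<Rightarrow> 'a::ab_group_add) \<Rightarrow> gauss \<Rightarrow> nat set \<Rightarrow> 'a" where
  "sing_deriv f D S = (\<Sum>T \<in> Pow S. (if even (card T) then f (resolve D S T)
                                      else - f (resolve D S T)))"

definition finite_type_degree :: "(gauss \<Rightarrow> 'a::ab_group_add) \<Rightarrow> nat \<Rightarrow> bool" where
  "finite_type_degree f n \<longleftrightarrow>
     (\<forall>D S. gauss_wf D \<longrightarrow> S \<subseteq> labels D \<longrightarrow> card S = n + 1 \<longrightarrow> sing_deriv f D S = 0) \<and>
     (\<exists>D S. gauss_wf D \<and> S \<subseteq> labels D \<and> card S = n \<and> sing_deriv f D S \<noteq> 0)"

end

theory Submission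
  imports Defs
begin

lemma pos_nth: "distinct w \<Longrightarrow> k < length w \<Longrightarrow> pos w (w!k) = k"
  unfolding pos_def by (rule the_equality) (auto simp: nth_eq_iff_index_eq)

lemma pos_in: "distinct w \<Longrightarrow> a \<in> set w \<Longrightarrow> pos w a < length w \<and> w ! pos w a = a"
  by (metis in_set_conv_nth pos_nth)

lemma pos_inj: "distinct w \<Longrightarrow> a \<in> set w \<Longrightarrow> b \<in> set w \<Longrightarrow> pos w a = pos w b \<Longrightarrow> a = b"
  by (metis pos_in)

lemma pos_Cons: "distinct (x#w) \<Longrightarrow> a \<in> set (x#w) \<Longrightarrow> pos (x#w) a = (if x = a then 0 else Suc (pos w a))"
proof -
  assume d: "distinct (x#w)" and a: "a \<in> set (x#w)"
  show ?thesis
  proof (cases "x = a")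
    case True then show ?thesis using pos_nth[OF d, of 0] by simp
  next
    case False
    then have "a \<in> set w" using a by simp
    then have "pos w a < length w" "w ! pos w a = a" using pos_in d by auto
    then have "pos (x#w) ((x#w) ! Suc (pos w a)) = Suc (pos w a)" using pos_nth[OF d, of "Suc (pos w a)"] by simp
    then show ?thesis using False \<open>w ! pos w a = a\<close> by simp
  qed
qed

lemma pos_append1: "distinct (u@v) \<Longrightarrow> a \<in> set u \<Longrightarrow> pos (u@v) a = pos u a"
  by (metis distinct_append pos_in pos_nth nth_append_left length_append trans_less_add1)

lemma pos_append2: "distinct (u@v) \<Longrightarrow> a \<in> set v \<Longrightarrow> pos (u@v) a = length u + pos v a"
proof -
  assume d: "distinct (u@v)" and a: "a \<in> set v"
  have "pos v a < length v" "v ! pos v a = a" using pos_in[of v a] d a by auto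
  then show ?thesis using pos_nth[OF d, of "length u + pos v a"] by (simp add: nth_append)
qed

lemma pos_map: "inj_on g (set w) \<Longrightarrow> distinct w \<Longrightarrow> a \<in> set w \<Longrightarrow> pos (map g w) (g a) = pos w a"
proof -
  assume i: "inj_on g (set w)" and d: "distinct w" and a: "a \<in> set w"
  have dm: "distinct (map g w)" using i d by (simp add: distinct_map)
  have "pos w a < length w" "w ! pos w a = a" using pos_in d a by auto
  then show ?thesis using pos_nth[OF dm, of "pos w a"] by simp
qed

lemma pos_filter_less: "distinct w \<Longrightarrow> a \<in> set w \<Longrightarrow> b \<in> set w \<Longrightarrow> P a \<Longrightarrow> P b \<Longrightarrow>
   (pos (filter P w) a < pos (filter P w) b) = (pos w a < pos w b)"
proof (induction w)
  case Nil then show ?case by simp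
next
  case (Cons x w)
  have d1: "distinct (filter P (x#w))" using Cons.prems by simp
  show ?case
  proof (cases "P x")
    case True
    then have d2: "distinct (x # filter P w)" using d1 by simp
    show ?thesis
    proof (cases "x = a \<or> x = b")
      case True2: True
      then show ?thesis using Cons.prems d2 \<open>P x\<close>
        by (auto simp: pos_Cons[OF Cons.prems(1)] pos_Cons[OF d2])
    next
      case False
      then have "a \<in> set w" "b \<in> set w" using Cons.prems by auto
      then show ?thesis using Cons False d2 \<open>P x\<close>
        by (auto simp: pos_Cons[OF Cons.prems(1)] pos_Cons[OF d2])
    qed
  next
    case False
    then have "x \<noteq> a" "x \<noteq> b" using Cons.prems by auto
    then have "a \<in> set w" "b \<in> set w" using Cons.prems by auto
    then show ?thesis using Cons False \<open>x \<noteq> a\<close> \<open>x \<noteq> b\<close>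
      by (auto simp: pos_Cons[OF Cons.prems(1)])
  qed
qed


definition cyc :: "nat \<Rightarrow> nat \<Rightarrow> nat \<Rightarrow> bool" where
  "cyc i j k \<longleftrightarrow> (i<j \<and> j<k) \<or> (j<k \<and> k<i) \<or> (k<i \<and> i<j)"

definition kapf :: "nat \<Rightarrow> nat \<Rightarrow> nat \<Rightarrow> nat \<Rightarrow> int" where
  "kapf t h a b = (if \<not> cyc t a h \<and> cyc t b h then 1 else if cyc t a h \<and> \<not> cyc t b h then -1 else 0)"

definition kap :: "(nat \<times> bool) list \<Rightarrow> nat \<Rightarrow> nat \<Rightarrow> int" where
  "kap w c d = kapf (pos w (c,True)) (pos w (c,False)) (pos w (d,True)) (pos w (d,False))"

lemma labels_iff: "i \<in> labels D \<longleftrightarrow> (\<exists>b. (i,b) \<in> set (fst D))"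
  unfolding labels_def by force

lemma wf_mem: "gauss_wf D \<Longrightarrow> i \<in> labels D \<Longrightarrow> (i,b) \<in> set (fst D)"
  unfolding gauss_wf_def by (cases b) auto

lemma wf_dist: "gauss_wf D \<Longrightarrow> distinct (fst D)"
  unfolding gauss_wf_def by auto

lemma wf_sign: "gauss_wf D \<Longrightarrow> i \<in> labels D \<Longrightarrow> snd D i = 1 \<or> snd D i = -1"
  unfolding gauss_wf_def by auto

lemma right_of_cyc: "t = pos w (c,True) \<Longrightarrow> h = pos w (c,False) \<Longrightarrow> t \<noteq> h \<Longrightarrow> k \<noteq> t \<Longrightarrow> k \<noteq> h \<Longrightarrow>
   right_of w c k = cyc t k h"
  unfolding right_of_def cyc_def Let_def by auto

lemma Ind_kap: assumes "gauss_wf D" "c \<in> labels D"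
  shows "Ind D c = (\<Sum>d\<in>labels D - {c}. kap (fst D) c d * snd D d)"
  unfolding Ind_def
proof (rule sum.cong[OF refl])
  fix d assume d: "d \<in> labels D - {c}"
  let ?w = "fst D"
  have dw: "distinct ?w" using assms wf_dist by auto
  have m: "(c,True) \<in> set ?w" "(c,False) \<in> set ?w" "(d,True) \<in> set ?w" "(d,False) \<in> set ?w"
    using assms d wf_mem by auto
  have ne: "pos ?w (c,True) \<noteq> pos ?w (c,False)" "pos ?w (d,True) \<noteq> pos ?w (c,True)"
     "pos ?w (d,True) \<noteq> pos ?w (c,False)" "pos ?w (d,False) \<noteq> pos ?w (c,True)"
     "pos ?w (d,False) \<noteq> pos ?w (c,False)"
    using pos_inj[OF dw] m d by (metis Pair_inject DiffE insertI1)+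
  have r1: "right_of ?w c (pos ?w (d,True)) = cyc (pos ?w (c,True)) (pos ?w (d,True)) (pos ?w (c,False))"
    by (rule right_of_cyc) (use ne in auto)
  have r2: "right_of ?w c (pos ?w (d,False)) = cyc (pos ?w (c,True)) (pos ?w (d,False)) (pos ?w (c,False))"
    by (rule right_of_cyc) (use ne in auto)
  show "(let R = right_of (fst D) c; td = pos (fst D) (d, True); hd = pos (fst D) (d, False)
          in if \<not> R td \<and> R hd then snd D d else if R td \<and> \<not> R hd then - snd D d else 0) =
        kap (fst D) c d * snd D d"
    unfolding Let_def kap_def kapf_def r1 r2 by auto
qed

lemma cyc_cong: "i\<noteq>j \<Longrightarrow> j\<noteq>k \<Longrightarrow> i\<noteq>k \<Longrightarrow> i'\<noteq>j' \<Longrightarrow> j'\<noteq>k' \<Longrightarrow> i'\<noteq>k' \<Longrightarrow>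
  (i<j) = (i'<j') \<Longrightarrow> (j<k) = (j'<k') \<Longrightarrow> (i<k) = (i'<k') \<Longrightarrow> cyc i j k = cyc i' j' k'"
  unfolding cyc_def by (cases "i<j"; cases "j<k"; cases "i<k") auto

lemma kap_order:
  assumes dw: "distinct w" and dw': "distinct w'" and cd: "c \<noteq> d"
    and E: "\<And>b. (c,b) \<in> set w" "\<And>b. (d,b) \<in> set w" "\<And>b. (c,b) \<in> set w'" "\<And>b. (d,b) \<in> set w'"
    and ord: "\<And>a b. a \<in> {(c,True),(c,False),(d,True),(d,False)} \<Longrightarrow> b \<in> {(c,True),(c,False),(d,True),(d,False)} \<Longrightarrow>
              (pos w a < pos w b) = (pos w' a < pos w' b)"
  shows "kap w c d = kap w' c d"
proof -
  have ne1: "pos w x \<noteq> pos w y \<and> pos w' x \<noteq> pos w' y" if "x \<in> set w" "y \<in> set w" "x \<in> set w'" "y \<in> set w'" "x \<noteq> y" for x y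
    using pos_inj[OF dw] pos_inj[OF dw'] that by metis
  have F: "pos w (c,True) \<noteq> pos w (c,False)" "pos w' (c,True) \<noteq> pos w' (c,False)" "pos w (c,True) \<noteq> pos w (d,True)" "pos w' (c,True) \<noteq> pos w' (d,True)" "pos w (c,True) \<noteq> pos w (d,False)" "pos w' (c,True) \<noteq> pos w' (d,False)" "pos w (c,False) \<noteq> pos w (d,True)" "pos w' (c,False) \<noteq> pos w' (d,True)" "pos w (c,False) \<noteq> pos w (d,False)" "pos w' (c,False) \<noteq> pos w' (d,False)" "pos w (d,True) \<noteq> pos w (d,False)" "pos w' (d,True) \<noteq> pos w' (d,False)"
    using ne1 E cd by simp_all
  have O: "(pos w (c,True) < pos w (c,False)) = (pos w' (c,True) < pos w' (c,False))" "(pos w (c,True) < pos w (d,True)) = (pos w' (c,True) < pos w' (d,True))" "(pos w (c,True) < pos w (d,False)) = (pos w' (c,True) < pos w' (d,False))" "(pos w (c,False) < pos w (c,True)) = (pos w' (c,False) < pos w' (c,True))" "(pos w (c,False) < pos w (d,True)) = (pos w' (c,False) < pos w' (d,True))" "(pos w (c,False) < pos w (d,False)) = (pos w' (c,False) < pos w' (d,False))" "(pos w (d,True) < pos w (c,True)) = (pos w' (d,True) < pos w' (c,True))" "(pos w (d,True) < pos w (c,False)) = (pos w' (d,True) < pos w' (c,False))" "(pos w (d,True) < pos w (d,False)) = (pos w' (d,True) < pos w' (d,False))" "(pos w (d,False) < pos w (c,True)) = (pos w' (d,False) < pos w' (c,True))" "(pos w (d,False) < pos w (c,False)) = (pos w'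 (d,False) < pos w' (c,False))" "(pos w (d,False) < pos w (d,True)) = (pos w' (d,False) < pos w' (d,True))"
    using ord by simp_all
  have c1: "cyc (pos w (c,True)) (pos w (d,True)) (pos w (c,False)) = cyc (pos w' (c,True)) (pos w' (d,True)) (pos w' (c,False))"
    by (rule cyc_cong) (use F O in simp_all)
  have c2: "cyc (pos w (c,True)) (pos w (d,False)) (pos w (c,False)) = cyc (pos w' (c,True)) (pos w' (d,False)) (pos w' (c,False))"
    by (rule cyc_cong) (use F O in simp_all)
  show ?thesis unfolding kap_def kapf_def c1 c2 ..
qed

lemma kap_filter:
  assumes dw: "distinct w" and cd: "c \<noteq> d"
    and E: "\<And>b. (c,b) \<in> set w" "\<And>b. (d,b) \<in> set w" and P: "\<And>b. P (c,b)" "\<And>b. P (d,b)"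
  shows "kap (filter P w) c d = kap w c d"
proof (rule kap_order)
  show "distinct (filter P w)" using dw by simp
  fix a b assume a: "a \<in> {(c,True),(c,False),(d,True),(d,False)}" and b: "b \<in> {(c,True),(c,False),(d,True),(d,False)}"
  have "a \<in> set w" "b \<in> set w" "P a" "P b" using a b E P by auto
  then show "(pos (filter P w) a < pos (filter P w) b) = (pos w a < pos w b)" using pos_filter_less[OF dw] by blast
qed (use dw cd E P in auto)

lemma kap_map:
  assumes dw: "distinct w" and inj: "inj_on g (set w)" and g: "\<And>b. g (c,b) = (c',b)" "\<And>b. g (d,b) = (d',b)"
    and E: "\<And>b. (c,b) \<in> set w" "\<And>b. (d,b) \<in> set w"
  shows "kap (map g w) c' d' = kap w c d"
proof -
  have "pos (map g w) (c',b) = pos w (c,b)" "pos (map g w) (d',b) = pos w (d,b)" for b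
    using pos_map[OF inj dw, of "(c,b)"] pos_map[OF inj dw, of "(d,b)"] g E by auto
  then show ?thesis unfolding kap_def by simp
qed

lemma cyc_adj: "t \<noteq> P \<Longrightarrow> t \<noteq> Suc P \<Longrightarrow> h \<noteq> P \<Longrightarrow> h \<noteq> Suc P \<Longrightarrow> cyc t P h = cyc t (Suc P) h"
  unfolding cyc_def by auto

lemma kapf_zero: "cyc t a h = cyc t b h \<Longrightarrow> kapf t h a b = 0"
  unfolding kapf_def by auto

lemma kapf_adjchord: "a \<noteq> P \<Longrightarrow> a \<noteq> Suc P \<Longrightarrow> b \<noteq> P \<Longrightarrow> b \<noteq> Suc P \<Longrightarrow>
   ((t = P \<and> h = Suc P) \<or> (t = Suc P \<and> h = P)) \<Longrightarrow> kapf t h a b = 0"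
  by (elim disjE conjE; simp add: kapf_def cyc_def; linarith)

lemma kapf_rot:
  assumes "distinct [t,h,a,b]" "t < L" "h < L" "a < L" "b < L"
  defines "f \<equiv> \<lambda>i::nat. if i = 0 then L - 1 else i - 1"
  shows "kapf (f t) (f h) (f a) (f b) = kapf t h a b"
proof -
  have "cyc (f x) (f y) (f z) = cyc x y z" if "distinct [x,y,z]" "x < L" "y < L" "z < L" for x y z
    using that unfolding f_def cyc_def by (cases "x=0"; cases "y=0"; cases "z=0") auto
  note cc = this
  have e1: "cyc (f t) (f a) (f h) = cyc t a h" using cc[of t a h] assms(1-5) by auto
  have e2: "cyc (f t) (f b) (f h) = cyc t b h" using cc[of t b h] assms(1-5) by auto
  show ?thesis unfolding kapf_def e1 e2 ..
qed


lemma a_inv_cong: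
  assumes "labels D = labels D'" "\<And>c. c \<in> labels D \<Longrightarrow> Ind D c = Ind D' c" "\<And>c. c \<in> labels D \<Longrightarrow> snd D c = snd D' c"
  shows "a_inv xs D = a_inv xs D'"
proof -
  have ct: "chord_tuples xs D = chord_tuples xs D'"
    unfolding chord_tuples_def using assms by auto
  show ?thesis unfolding a_inv_def ct
  proof (rule sum.cong[OF refl], rule prod.cong[OF refl])
    fix cs i assume "cs \<in> chord_tuples xs D'" "i \<in> {..<length xs}"
    then have "cs ! i \<in> labels D" using ct unfolding chord_tuples_def by auto
    then show "snd D (cs ! i) = snd D' (cs ! i)" using assms(3) by auto
  qed
qed

lemma Ind_cong:
  assumes wf: "gauss_wf D" "gauss_wf D'" and l: "labels D = labels D'" and c: "c \<in> labels D"
    and k: "\<And>d. d \<in> labels D \<Longrightarrow> d \<noteq> c \<Longrightarrow> kap (fst D) c d = kap (fst D') c d"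
    and s: "\<And>d. d \<in> labels D \<Longrightarrow> snd D d = snd D' d"
  shows "Ind D c = Ind D' c"
  unfolding Ind_kap[OF wf(1) c] Ind_kap[OF wf(2) c[unfolded l]] l[symmetric]
  using k s by (intro sum.cong) auto

lemma pos_rot: assumes d: "distinct w" and a: "a \<in> set w" shows
   "pos (rotate1 w) a = (if pos w a = 0 then length w - 1 else pos w a - 1)"
proof (cases w)
  case Nil then show ?thesis using a by simp
next
  case (Cons x w')
  have d': "distinct (w' @ [x])" using d Cons by auto
  show ?thesis
  proof (cases "a = x")
    case True
    then show ?thesis using Cons d pos_append2[OF d', of x] pos_Cons[of x w' a] pos_nth[of "[x]" 0] by simp
  next
    case False
    then have "a \<in> set w'" using a Cons by auto
    then show ?thesis using Cons d False pos_append1[OF d', of a] pos_Cons[of x w' a] by simp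
  qed
qed

lemma kap_rot:
  assumes d: "distinct w" and cd: "c \<noteq> d" and E: "\<And>b. (c,b) \<in> set w" "\<And>b. (d,b) \<in> set w"
  shows "kap (rotate1 w) c d = kap w c d"
proof -
  define f where "f \<equiv> \<lambda>i::nat. if i = 0 then length w - 1 else i - 1"
  have p: "pos (rotate1 w) a = f (pos w a)" if "a \<in> set w" for a
    using pos_rot[OF d that] unfolding f_def by simp
  have ne1: "pos w x \<noteq> pos w y" if "x \<in> set w" "y \<in> set w" "x \<noteq> y" for x y
    using pos_inj[OF d] that by metis
  have L: "pos w x < length w" if "x \<in> set w" for x using pos_in[OF d that] by simp
  have "kapf (f (pos w (c,True))) (f (pos w (c,False))) (f (pos w (d,True))) (f (pos w (d,False)))
       = kapf (pos w (c,True)) (pos w (c,False)) (pos w (d,True)) (pos w (d,False))"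
    unfolding f_def
    by (rule kapf_rot) (use ne1 E L cd in auto)
  then show ?thesis unfolding kap_def using p E by simp
qed

lemma rot_inv:
  assumes wf: "gauss_wf D" "gauss_wf D'" and st: "rot_step D D'"
  shows "a_inv xs D = a_inv xs D'"
proof -
  have w: "fst D' = rotate1 (fst D)" and ag: "agree (snd D) (snd D') (fst D)" using st unfolding rot_step_def by auto
  have l: "labels D = labels D'" unfolding labels_def w by simp
  have s: "snd D d = snd D' d" if "d \<in> labels D" for d
    using ag that unfolding agree_def labels_def by auto
  show ?thesis
  proof (rule a_inv_cong[OF l])
    fix c assume c: "c \<in> labels D"
    show "Ind D c = Ind D' c"
    proof (rule Ind_cong[OF wf l c _ s])
      fix d assume "d \<in> labels D" "d \<noteq> c"
      then show "kap (fst D) c d = kap (fst D') c d" unfolding w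
        using kap_rot[OF wf_dist[OF wf(1)], of c d] wf_mem[OF wf(1)] c by auto
    qed
  qed (use s in auto)
qed

lemma relabel_inv:
  assumes wf: "gauss_wf D" "gauss_wf D'" and st: "relabel_step D D'"
  shows "a_inv xs D = a_inv xs D'"
proof -
  obtain \<pi> where inj: "inj_on \<pi> (labels D)" and w: "fst D' = map (\<lambda>(i, b). (\<pi> i, b)) (fst D)"
    and sg: "\<And>i. i \<in> labels D \<Longrightarrow> snd D' (\<pi> i) = snd D i"
    using st unfolding relabel_step_def by auto
  define g where "g = (\<lambda>(i::nat, b::bool). (\<pi> i, b))"
  have w': "fst D' = map g (fst D)" using w g_def by simp
  have l: "labels D' = \<pi> ` labels D" unfolding labels_def w' g_def by force
  have ginj: "inj_on g (set (fst D))"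
    unfolding inj_on_def g_def using inj unfolding inj_on_def labels_def by force
  have dw: "distinct (fst D)" using wf_dist[OF wf(1)] .
  have kk: "kap (fst D') (\<pi> c) (\<pi> d) = kap (fst D) c d" if "c \<in> labels D" "d \<in> labels D" for c d
    unfolding w' by (rule kap_map[OF dw ginj]) (use that wf_mem[OF wf(1)] in \<open>auto simp: g_def\<close>)
  have Ind: "Ind D' (\<pi> c) = Ind D c" if c: "c \<in> labels D" for c
  proof -
    have c': "\<pi> c \<in> labels D'" using l c by auto
    have im: "labels D' - {\<pi> c} = \<pi> ` (labels D - {c})" using l inj c by (auto simp: inj_on_def)
    have "Ind D' (\<pi> c) = (\<Sum>d\<in>\<pi> ` (labels D - {c}). kap (fst D') (\<pi> c) d * snd D' d)"
      unfolding Ind_kap[OF wf(2) c'] im ..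
    also have "\<dots> = (\<Sum>d\<in>labels D - {c}. kap (fst D') (\<pi> c) (\<pi> d) * snd D' (\<pi> d))"
      by (rule sum.reindex_cong[of \<pi>]) (use inj in \<open>auto intro: inj_on_subset\<close>)
    also have "\<dots> = (\<Sum>d\<in>labels D - {c}. kap (fst D) c d * snd D d)"
      using kk sg c by (intro sum.cong) auto
    finally show ?thesis using Ind_kap[OF wf(1) c] by simp
  qed
  have ct: "chord_tuples xs D' = map \<pi> ` chord_tuples xs D"
  proof
    show "map \<pi> ` chord_tuples xs D \<subseteq> chord_tuples xs D'"
      unfolding chord_tuples_def using l Ind by auto
  next
    show "chord_tuples xs D' \<subseteq> map \<pi> ` chord_tuples xs D"
    proof
      fix cs' assume cs': "cs' \<in> chord_tuples xs D'"
      define cs where "cs = map (inv_into (labels D) \<pi>) cs'"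
      have el: "\<And>i. i < length xs \<Longrightarrow> cs' ! i \<in> \<pi> ` labels D" using cs' l unfolding chord_tuples_def by auto
      have len: "length cs' = length xs" using cs' unfolding chord_tuples_def by auto
      have e1: "map \<pi> cs = cs'" unfolding cs_def
        by (rule nth_equalityI) (use el len in \<open>auto simp: f_inv_into_f\<close>)
      have e2: "\<And>i. i < length xs \<Longrightarrow> cs ! i \<in> labels D" unfolding cs_def using el len
        by (auto simp: inv_into_into)
      have "cs \<in> chord_tuples xs D"
        unfolding chord_tuples_def
      proof (intro CollectI conjI allI impI)
        show "length cs = length xs" using len cs_def by simp
        fix i assume i: "i < length xs"
        show "cs ! i \<in> labels D" using e2 i .
        have "Ind D (cs ! i) = Ind D' (\<pi> (cs ! i))" using Ind e2 i by simp
        also have "\<pi> (cs ! i) = cs' ! i" using e1 i len by (metis nth_map cs_def length_map)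
        finally show "Ind D (cs ! i) = xs ! i" using cs' i unfolding chord_tuples_def by auto
      qed
      then show "cs' \<in> map \<pi> ` chord_tuples xs D" using e1 by auto
    qed
  qed
  have minj: "inj_on (map \<pi>) (chord_tuples xs D)"
  proof (rule inj_onI)
    fix a b assume a: "a \<in> chord_tuples xs D" and b: "b \<in> chord_tuples xs D" and e: "map \<pi> a = map \<pi> b"
    have "set a \<union> set b \<subseteq> labels D" using a b unfolding chord_tuples_def by (auto simp: in_set_conv_nth)
    then have "inj_on \<pi> (set a \<union> set b)" using inj inj_on_subset by blast
    then show "a = b" using e inj_on_map_eq_map by blast
  qed
  show ?thesis unfolding a_inv_def ct sum.reindex[OF minj] o_def
    by (rule sum.cong[OF refl], rule prod.cong[OF refl]) (use sg in \<open>auto simp: chord_tuples_def\<close>)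
qed


lemma finite_labels: "finite (labels D)" unfolding labels_def by simp

lemma finite_ct: "finite (chord_tuples xs D)"
proof (rule finite_subset[OF _ finite_lists_length_eq[OF finite_labels, of D "length xs"]])
  show "chord_tuples xs D \<subseteq> {cs. set cs \<subseteq> labels D \<and> length cs = length xs}"
    unfolding chord_tuples_def by (auto simp: in_set_conv_nth)
qed

lemma wf_pos_ne: "gauss_wf D \<Longrightarrow> c \<in> labels D \<Longrightarrow> (d,b') \<in> set (fst D) \<Longrightarrow> (c,b) \<noteq> (d,b') \<Longrightarrow>
   pos (fst D) (c,b) \<noteq> pos (fst D) (d,b')"
  using pos_inj[OF wf_dist] wf_mem by metis

lemma R1_inv:
  assumes wf: "gauss_wf D" "gauss_wf D'" and st: "R1_step D D'" and x0: "0 \<notin> set xs"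
  shows "a_inv xs D = a_inv xs D'"
proof -
  obtain u v i b where wD: "fst D = u @ v" and wD': "fst D' = u @ (i,b) # (i,\<not>b) # v"
    and ag: "agree (snd D) (snd D') (fst D)"
    using st unfolding R1_step_def by auto
  have dw': "distinct (fst D')" using wf_dist[OF wf(2)] .
  have ni: "\<forall>e\<in>set (u@v). fst e \<noteq> i"
  proof
    fix e assume e: "e \<in> set (u@v)"
    show "fst e \<noteq> i"
    proof
      assume "fst e = i"
      then have "e = (i,b) \<or> e = (i,\<not>b)" by (cases e) auto
      then show False using e dw' unfolding wD' by auto
    qed
  qed
  have fD: "fst D = filter (\<lambda>e. fst e \<noteq> i) (fst D')"
    unfolding wD wD' using ni by simp
  have lab: "labels D' = insert i (labels D)" unfolding labels_def wD wD' by auto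
  have niD: "i \<notin> labels D" using ni unfolding labels_def wD by auto
  have sD: "snd D' c = snd D c" if "c \<in> labels D" for c
    using ag that unfolding agree_def labels_def by auto
  have memD': "(c,b') \<in> set (fst D')" if "c \<in> labels D" for c b'
    using wf_mem[OF wf(2)] lab that by auto
  have kold: "kap (fst D') c d = kap (fst D) c d" if "c \<in> labels D" "d \<in> labels D" "c \<noteq> d" for c d
    unfolding fD using that niD memD' by (intro kap_filter[symmetric]) (auto simp: dw')
  have p1: "pos (fst D') (i,b) = length u" and p2: "pos (fst D') (i,\<not>b) = Suc (length u)"
    using dw' unfolding wD' by (simp_all add: pos_append2 pos_Cons)
  have pc: "pos (fst D') (c,b') \<noteq> length u" "pos (fst D') (c,b') \<noteq> Suc (length u)" if "c \<in> labels D" for c b'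
  proof -
    have m: "(c,b') \<in> set (fst D')" "(i,b) \<in> set (fst D')" "(i,\<not>b) \<in> set (fst D')" "c \<noteq> i"
      using memD'[OF that] that niD unfolding wD' by auto
    show "pos (fst D') (c,b') \<noteq> length u" using pos_inj[OF dw' m(1) m(2)] m(4) p1 by auto
    show "pos (fst D') (c,b') \<noteq> Suc (length u)" using pos_inj[OF dw' m(1) m(3)] m(4) p2 by auto
  qed
  have k1: "kap (fst D') c i = 0" if "c \<in> labels D" for c
  proof -
    let ?t = "pos (fst D') (c,True)" and ?h = "pos (fst D') (c,False)" and ?L = "length u"
    have cc: "cyc ?t ?L ?h = cyc ?t (Suc ?L) ?h" by (rule cyc_adj) (use pc[OF that] in auto)
    show ?thesis
    proof (cases b)
      case True
      then have "pos (fst D') (i,True) = ?L" "pos (fst D') (i,False) = Suc ?L" using p1 p2 by auto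
      then show ?thesis unfolding kap_def using kapf_zero[OF cc] by simp
    next
      case False
      then have "pos (fst D') (i,False) = ?L" "pos (fst D') (i,True) = Suc ?L" using p1 p2 by auto
      then show ?thesis unfolding kap_def using kapf_zero[OF cc[symmetric]] by simp
    qed
  qed
  have k2: "kap (fst D') i d = 0" if "d \<in> labels D" for d
  proof -
    have A: "(pos (fst D') (i,True) = length u \<and> pos (fst D') (i,False) = Suc (length u)) \<or>
          (pos (fst D') (i,True) = Suc (length u) \<and> pos (fst D') (i,False) = length u)"
      using p1 p2 by (cases b) auto
    show ?thesis unfolding kap_def
      by (rule kapf_adjchord[OF _ _ _ _ A]) (use pc[OF that] in auto)
  qed
  have IndOld: "Ind D' c = Ind D c" if c: "c \<in> labels D" for c
  proof -
    have e: "labels D' - {c} = insert i (labels D - {c})" using lab c niD by auto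
    have c': "c \<in> labels D'" using lab c by auto
    have "Ind D' c = kap (fst D') c i * snd D' i + (\<Sum>d\<in>labels D - {c}. kap (fst D') c d * snd D' d)"
      unfolding Ind_kap[OF wf(2) c'] e using c niD finite_labels[of D] by (subst sum.insert) auto
    also have "\<dots> = (\<Sum>d\<in>labels D - {c}. kap (fst D) c d * snd D d)"
      using k1[OF c] kold sD c by (auto intro!: sum.cong)
    finally show ?thesis using Ind_kap[OF wf(1) c] by simp
  qed
  have Indi: "Ind D' i = 0"
  proof -
    have e: "labels D' - {i} = labels D" using lab niD by auto
    have i': "i \<in> labels D'" using lab by auto
    show ?thesis using k2 unfolding Ind_kap[OF wf(2) i'] e by simp
  qed
  have ct: "chord_tuples xs D' = chord_tuples xs D"
  proof -
    have "cs ! m \<noteq> i" if "cs \<in> chord_tuples xs D'" "m < length xs" for cs m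
    proof
      assume "cs ! m = i"
      then have "xs ! m = 0" using that Indi unfolding chord_tuples_def by auto
      then show False using x0 that(2) nth_mem by metis
    qed
    note H = this
    show ?thesis
    proof (intro set_eqI iffI)
      fix cs assume cs: "cs \<in> chord_tuples xs D'"
      show "cs \<in> chord_tuples xs D" unfolding chord_tuples_def
      proof (intro CollectI conjI allI impI)
        show "length cs = length xs" using cs by (simp add: chord_tuples_def)
        fix m assume m: "m < length xs"
        have a: "cs!m \<in> labels D'" "Ind D' (cs!m) = xs!m" using cs m by (auto simp: chord_tuples_def)
        show "cs!m \<in> labels D" using a(1) H[OF cs m] lab by auto
        then show "Ind D (cs!m) = xs!m" using a(2) IndOld by simp
      qed
    next
      fix cs assume cs: "cs \<in> chord_tuples xs D"
      show "cs \<in> chord_tuples xs D'" using cs lab IndOld by (auto simp: chord_tuples_def)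
    qed
  qed
  show ?thesis unfolding a_inv_def ct
    by (rule sum.cong[OF refl], rule prod.cong[OF refl]) (use sD in \<open>auto simp: chord_tuples_def\<close>)
qed


lemma swap_sum_zero:
  fixes f :: "nat list \<Rightarrow> int"
  assumes A: "\<And>a. a \<in> A \<Longrightarrow> \<sigma> a \<in> A" "\<And>a. a \<in> A \<Longrightarrow> \<sigma> (\<sigma> a) = a"
    and f: "\<And>a. a \<in> A \<Longrightarrow> f (\<sigma> a) = - f a"
  shows "sum f A = 0"
proof -
  have "sum f A = sum (\<lambda>a. - f a) A"
    by (rule sum.reindex_bij_witness[of A \<sigma> \<sigma>]) (use A f in auto)
  then show ?thesis by (simp add: sum_negf)
qed

lemma swap_ainv:
  assumes dxs: "distinct xs" and lab: "labels D' = insert i (insert j L)" and ij: "i \<noteq> j"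
    and ijL: "i \<notin> L" "j \<notin> L" and Iij: "Ind D' i = Ind D' j" and sij: "snd D' i = - snd D' j"
  shows "a_inv xs D' = (\<Sum>cs \<in> {cs \<in> chord_tuples xs D'. \<forall>m<length xs. cs!m \<in> L}. \<Prod>m<length xs. snd D' (cs!m))"
proof -
  let ?A = "chord_tuples xs D'"
  let ?B = "{cs \<in> chord_tuples xs D'. \<forall>m<length xs. cs!m \<in> L}"
  let ?f = "\<lambda>cs. \<Prod>m<length xs. snd D' (cs!m)"
  define sw where "sw = (\<lambda>c. if c = i then j else if c = j then i else c)"
  have sw2: "sw (sw c) = c" for c unfolding sw_def using ij by auto
  have swI: "Ind D' (sw c) = Ind D' c" for c unfolding sw_def using Iij by auto
  have swl: "sw c \<in> labels D' \<longleftrightarrow> c \<in> labels D'" for c unfolding sw_def lab by auto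
  have uniq: "m = m'" if "cs \<in> ?A" "m < length xs" "m' < length xs" "cs!m \<in> {i,j}" "cs!m' \<in> {i,j}" for cs m m'
  proof -
    have "xs!m = Ind D' (cs!m)" "xs!m' = Ind D' (cs!m')" using that unfolding chord_tuples_def by auto
    then have "xs!m = xs!m'" using that(4,5) Iij by auto
    then show ?thesis using dxs that(2,3) nth_eq_iff_index_eq by blast
  qed
  have z: "sum ?f (?A - ?B) = 0"
  proof (rule swap_sum_zero[of _ "map sw"])
    fix cs assume cs: "cs \<in> ?A - ?B"
    then obtain m0 where m0: "m0 < length xs" "cs!m0 \<notin> L" by auto
    have len: "length cs = length xs" using cs unfolding chord_tuples_def by auto
    have m0ij: "cs!m0 \<in> {i,j}" using cs m0 lab unfolding chord_tuples_def by auto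
    have other: "cs!m \<notin> {i,j}" if "m < length xs" "m \<noteq> m0" for m
      using uniq[of cs m m0] cs that m0 m0ij by auto
    show "map sw cs \<in> ?A - ?B"
    proof
      show "map sw cs \<in> ?A" using cs swI swl unfolding chord_tuples_def by auto
      show "map sw cs \<notin> ?B" using m0 m0ij len ijL unfolding sw_def by auto
    qed
    show "map sw (map sw cs) = cs" using sw2 by (simp add: map_idI)
    have fin: "finite {..<length xs}" by simp
    have "?f (map sw cs) = snd D' (sw (cs!m0)) * (\<Prod>m\<in>{..<length xs} - {m0}. snd D' (sw (cs!m)))"
      using prod.remove[OF fin, of m0] m0 len by simp
    also have "\<dots> = - snd D' (cs!m0) * (\<Prod>m\<in>{..<length xs} - {m0}. snd D' (cs!m))"
    proof -
      have "snd D' (sw (cs!m0)) = - snd D' (cs!m0)" using m0ij sij unfolding sw_def by auto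
      moreover have "(\<Prod>m\<in>{..<length xs} - {m0}. snd D' (sw (cs!m))) = (\<Prod>m\<in>{..<length xs} - {m0}. snd D' (cs!m))"
        using other unfolding sw_def by (intro prod.cong) auto
      ultimately show ?thesis by simp
    qed
    also have "\<dots> = - ?f cs" using prod.remove[OF fin, of m0 "\<lambda>m. snd D' (cs!m)"] m0 by simp
    finally show "?f (map sw cs) = - ?f cs" .
  qed
  have "a_inv xs D' = sum ?f ?A" unfolding a_inv_def ..
  also have "\<dots> = sum ?f (?A - ?B) + sum ?f ?B" by (rule sum.subset_diff) (use finite_ct in auto)
  also have "\<dots> = sum ?f ?B" unfolding z by simp
  finally show ?thesis .
qed

lemma cyc_adj2: "a \<noteq> P \<Longrightarrow> a \<noteq> Suc P \<Longrightarrow> a \<noteq> Q \<Longrightarrow> a \<noteq> Suc Q \<Longrightarrow> Suc P < Q \<Longrightarrow>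
   t \<in> {P, Suc P} \<Longrightarrow> h \<in> {Q, Suc Q} \<Longrightarrow> cyc t a h = cyc P a Q"
  unfolding cyc_def by auto


lemma R2_inv:
  assumes wf: "gauss_wf D" "gauss_wf D'" and st: "R2_step D D'" and dxs: "distinct xs"
  shows "a_inv xs D = a_inv xs D'"
proof -
  obtain u v x i j k l where wD: "fst D = u @ v @ x" and kl: "(k,l) = (i,j) \<or> (k,l) = (j,i)"
    and wD0: "fst D' = u @ [(i, True), (j, True)] @ v @ [(k, False), (l, False)] @ x"
    and sij: "snd D' i = - snd D' j" and ag: "agree (snd D) (snd D') (fst D)"
    using st unfolding R2_step_def by blast
  have wD': "fst D' = u @ (i,True) # (j,True) # v @ (k,False) # (l,False) # x" using wD0 by simp
  have dw': "distinct (fst D')" using wf_dist[OF wf(2)] .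
  have ij: "i \<noteq> j" using dw' unfolding wD' by auto
  have ni: "\<forall>e\<in>set (u@v@x). fst e \<noteq> i \<and> fst e \<noteq> j"
  proof
    fix e assume e: "e \<in> set (u@v@x)"
    obtain a bb where eab: "e = (a,bb)" by (cases e)
    show "fst e \<noteq> i \<and> fst e \<noteq> j"
      using e dw' kl unfolding wD' eab by (cases bb) auto
  qed
  have fD: "fst D = filter (\<lambda>e. fst e \<noteq> i \<and> fst e \<noteq> j) (fst D')"
    unfolding wD wD' using ni kl by auto
  have lab: "labels D' = insert i (insert j (labels D))" unfolding labels_def wD wD' using kl by auto
  have niD: "i \<notin> labels D" "j \<notin> labels D" using ni unfolding labels_def wD by auto
  have sD: "snd D' c = snd D c" if "c \<in> labels D" for c
    using ag that unfolding agree_def labels_def by auto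
  have memD': "(c,b') \<in> set (fst D')" if "c \<in> labels D'" for c b'
    using wf_mem[OF wf(2)] that by auto
  have kold: "kap (fst D') c d = kap (fst D) c d" if "c \<in> labels D" "d \<in> labels D" "c \<noteq> d" for c d
    unfolding fD using that niD memD' lab by (intro kap_filter[symmetric]) (auto simp: dw')
  define P where "P = length u"
  define Q where "Q = length u + 2 + length v"
  have PQ: "Suc P < Q" unfolding P_def Q_def by simp
  have pT: "pos (fst D') (i,True) = P" "pos (fst D') (j,True) = Suc P"
    using dw' unfolding wD' P_def by (simp_all add: pos_append2 pos_Cons)
  have pF: "pos (fst D') (k,False) = Q" "pos (fst D') (l,False) = Suc Q"
    using dw' unfolding wD' Q_def by (simp_all add: pos_append2 pos_Cons)
  have hij: "(pos (fst D') (i,False) = Q \<and> pos (fst D') (j,False) = Suc Q) \<or>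
             (pos (fst D') (i,False) = Suc Q \<and> pos (fst D') (j,False) = Q)"
    using kl pF by auto
  have pc: "pos (fst D') (c,b') \<notin> {P, Suc P, Q, Suc Q}" if c: "c \<in> labels D" for c b'
  proof -
    have m: "(c,b') \<in> set (fst D')" "c \<noteq> i" "c \<noteq> j" using memD' lab c niD by auto
    have mi: "(i,bb) \<in> set (fst D')" "(j,bb) \<in> set (fst D')" for bb using memD' lab by auto
    have "pos (fst D') (c,b') \<noteq> pos (fst D') (i,bb)" "pos (fst D') (c,b') \<noteq> pos (fst D') (j,bb)" for bb
      using pos_inj[OF dw' m(1) mi(1)[of bb]] pos_inj[OF dw' m(1) mi(2)[of bb]] m(2,3) by auto
    note ne = this
    have "pos (fst D') (c,b') \<noteq> P" using ne(1)[of True] pT by simp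
    moreover have "pos (fst D') (c,b') \<noteq> Suc P" using ne(2)[of True] pT by simp
    moreover have "pos (fst D') (c,b') \<noteq> Q \<and> pos (fst D') (c,b') \<noteq> Suc Q"
      using hij ne(1)[of False] ne(2)[of False] by (elim disjE conjE) simp_all
    ultimately show ?thesis by simp
  qed
  have k1: "kap (fst D') c i = kap (fst D') c j" if c: "c \<in> labels D" for c
  proof -
    let ?t = "pos (fst D') (c,True)" and ?h = "pos (fst D') (c,False)"
    have c1: "cyc ?t P ?h = cyc ?t (Suc P) ?h" by (rule cyc_adj) (use pc[OF c] in auto)
    have c2: "cyc ?t Q ?h = cyc ?t (Suc Q) ?h" by (rule cyc_adj) (use pc[OF c] in auto)
    have c3: "cyc ?t (pos (fst D') (i,False)) ?h = cyc ?t (pos (fst D') (j,False)) ?h"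
      using hij c2 by auto
    show ?thesis unfolding kap_def kapf_def pT c1 c3 ..
  qed
  have k2: "kap (fst D') i d = kap (fst D') j d" if d: "d \<in> labels D" for d
  proof -
    let ?a = "pos (fst D') (d,True)" and ?b = "pos (fst D') (d,False)"
    have hi: "pos (fst D') (i,False) \<in> {Q, Suc Q}" "pos (fst D') (j,False) \<in> {Q, Suc Q}" using hij by auto
    have e: "cyc P ?a (pos (fst D') (i,False)) = cyc (Suc P) ?a (pos (fst D') (j,False))"
      "cyc P ?b (pos (fst D') (i,False)) = cyc (Suc P) ?b (pos (fst D') (j,False))"
      using cyc_adj2[OF _ _ _ _ PQ _ hi(1), of ?a P] cyc_adj2[OF _ _ _ _ PQ _ hi(2), of ?a "Suc P"]
        cyc_adj2[OF _ _ _ _ PQ _ hi(1), of ?b P] cyc_adj2[OF _ _ _ _ PQ _ hi(2), of ?b "Suc P"] pc[OF d]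
      by auto
    show ?thesis unfolding kap_def kapf_def pT e ..
  qed
  have kij: "kap (fst D') i j * snd D' j = kap (fst D') j i * snd D' i"
  proof (cases "pos (fst D') (i,False) = Q")
    case True
    then have "pos (fst D') (j,False) = Suc Q" using hij by auto
    then have "kap (fst D') i j = -1" "kap (fst D') j i = 1"
      unfolding kap_def pT using True PQ by (auto simp: kapf_def cyc_def)
    then show ?thesis using sij by simp
  next
    case False
    then have "pos (fst D') (i,False) = Suc Q" "pos (fst D') (j,False) = Q" using hij by auto
    then have "kap (fst D') i j = 0" "kap (fst D') j i = 0"
      unfolding kap_def pT using PQ by (auto simp: kapf_def cyc_def)
    then show ?thesis by simp
  qed
  have IndOld: "Ind D' c = Ind D c" if c: "c \<in> labels D" for c
  proof -
    have e: "labels D' - {c} = insert i (insert j (labels D - {c}))" using lab c niD by auto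
    have c': "c \<in> labels D'" using lab c by auto
    have "Ind D' c = kap (fst D') c i * snd D' i + (kap (fst D') c j * snd D' j + (\<Sum>d\<in>labels D - {c}. kap (fst D') c d * snd D' d))"
      unfolding Ind_kap[OF wf(2) c'] e using c niD ij finite_labels[of D] by (simp add: sum.insert)
    also have "\<dots> = (\<Sum>d\<in>labels D - {c}. kap (fst D) c d * snd D d)"
      using k1[OF c] sij kold sD c by (auto intro!: sum.cong simp: algebra_simps)
    finally show ?thesis using Ind_kap[OF wf(1) c] by simp
  qed
  have Iij: "Ind D' i = Ind D' j"
  proof -
    have ei: "labels D' - {i} = insert j (labels D)" using lab niD ij by auto
    have ej: "labels D' - {j} = insert i (labels D)" using lab niD ij by auto
    have i': "i \<in> labels D'" and j': "j \<in> labels D'" using lab by auto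
    have "Ind D' i = kap (fst D') i j * snd D' j + (\<Sum>d\<in>labels D. kap (fst D') i d * snd D' d)"
      unfolding Ind_kap[OF wf(2) i'] ei using niD finite_labels[of D] by simp
    also have "\<dots> = kap (fst D') j i * snd D' i + (\<Sum>d\<in>labels D. kap (fst D') j d * snd D' d)"
      using kij k2 by simp
    also have "\<dots> = Ind D' j"
      unfolding Ind_kap[OF wf(2) j'] ej using niD finite_labels[of D] by simp
    finally show ?thesis .
  qed
  have main: "a_inv xs D' = (\<Sum>cs \<in> {cs \<in> chord_tuples xs D'. \<forall>m<length xs. cs!m \<in> labels D}. \<Prod>m<length xs. snd D' (cs!m))"
    by (rule swap_ainv[OF dxs lab ij niD Iij sij])
  have ct: "{cs \<in> chord_tuples xs D'. \<forall>m<length xs. cs!m \<in> labels D} = chord_tuples xs D"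
    unfolding chord_tuples_def using lab IndOld by auto
  show ?thesis unfolding main ct unfolding a_inv_def
    by (rule sum.cong[OF refl], rule prod.cong[OF refl]) (use sD in \<open>auto simp: chord_tuples_def\<close>)
qed


fun posl :: "(nat \<times> bool) list \<Rightarrow> nat \<times> bool \<Rightarrow> nat" where
  "posl [] a = 0"
| "posl (x#w) a = (if x = a then 0 else Suc (posl w a))"

lemma pos_posl: "distinct w \<Longrightarrow> a \<in> set w \<Longrightarrow> pos w a = posl w a"
  by (induction w) (auto simp: pos_Cons)

definition kapl :: "(nat \<times> bool) list \<Rightarrow> nat \<Rightarrow> nat \<Rightarrow> int" where
  "kapl w c d = kapf (posl w (c,True)) (posl w (c,False)) (posl w (d,True)) (posl w (d,False))"

lemma kap_kapl: "distinct w \<Longrightarrow> (\<And>b. (c,b) \<in> set w) \<Longrightarrow> (\<And>b. (d,b) \<in> set w) \<Longrightarrow> kap w c d = kapl w c d"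
  unfolding kap_def kapl_def by (simp add: pos_posl)

lemma R3_core1:
  fixes s :: "nat \<Rightarrow> int"
  assumes pqr: "p \<noteq> q" "p \<noteq> r" "q \<noteq> r"
    and sg: "s p * sgnb eT * sgnb eM = - s q * sgnb eT * sgnb eB" "- s q * sgnb eT * sgnb eB = s r * sgnb eM * sgnb eB"
  defines "W \<equiv> segT eT p q @ segM eM p r @ segB eB q r" and "W' \<equiv> rev (segT eT p q) @ rev (segM eM p r) @ rev (segB eB q r)"
  shows "kapl W p q * s q + kapl W p r * s r = kapl W' p q * s q + kapl W' p r * s r"
    and "kapl W q p * s p + kapl W q r * s r = kapl W' q p * s p + kapl W' q r * s r"
    and "kapl W r p * s p + kapl W r q * s q = kapl W' r p * s p + kapl W' r q * s q"
  using sg pqr unfolding W_def W'_def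
  by (cases eT; cases eM; cases eB; simp add: segT_def segM_def segB_def sgnb_def kapl_def kapf_def cyc_def; linarith)+

lemma R3_core:
  fixes s :: "nat \<Rightarrow> int"
  assumes pqr: "p \<noteq> q" "p \<noteq> r" "q \<noteq> r"
    and A: "(A1, A2, A3) \<in> {(segT eT p q, segM eM p r, segB eB q r), (segT eT p q, segB eB q r, segM eM p r),
              (segM eM p r, segT eT p q, segB eB q r), (segM eM p r, segB eB q r, segT eT p q),
              (segB eB q r, segT eT p q, segM eM p r), (segB eB q r, segM eM p r, segT eT p q)}"
    and sg: "s p * sgnb eT * sgnb eM = - s q * sgnb eT * sgnb eB" "- s q * sgnb eT * sgnb eB = s r * sgnb eM * sgnb eB"
  defines "W \<equiv> A1 @ A2 @ A3" and "W' \<equiv> rev A1 @ rev A2 @ rev A3"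
  shows "kapl W p q * s q + kapl W p r * s r = kapl W' p q * s q + kapl W' p r * s r
    \<and> kapl W q p * s p + kapl W q r * s r = kapl W' q p * s p + kapl W' q r * s r
    \<and> kapl W r p * s p + kapl W r q * s q = kapl W' r p * s p + kapl W' r q * s q"
  using A sg pqr unfolding W_def W'_def
  apply (simp only: insert_iff empty_iff prod.inject simp_thms)
  apply (elim disjE conjE)
  by (hypsubst; cases eT; cases eM; cases eB; simp add: segT_def segM_def segB_def sgnb_def kapl_def kapf_def cyc_def; linarith)+


lemma R3_segs:
  assumes A: "(A1, A2, A3) \<in> {(segT eT p q, segM eM p r, segB eB q r), (segT eT p q, segB eB q r, segM eM p r),
              (segM eM p r, segT eT p q, segB eB q r), (segM eM p r, segB eB q r, segT eT p q),
              (segB eB q r, segT eT p q, segM eM p r), (segB eB q r, segM eM p r, segT eT p q)}"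
  shows "set A1 \<union> set A2 \<union> set A3 = {(p,True),(q,True),(p,False),(r,True),(r,False),(q,False)}
    \<and> (distinct (A1@A2@A3) \<longrightarrow> p\<noteq>q \<and> p\<noteq>r \<and> q\<noteq>r)
    \<and> (\<forall>B\<in>{A1,A2,A3}. \<exists>e1 e2. B = [e1,e2] \<and> fst e1 \<in> {p,q,r} \<and> fst e2 \<in> {p,q,r} \<and> (p\<noteq>q \<and> p\<noteq>r \<and> q\<noteq>r \<longrightarrow> fst e1 \<noteq> fst e2))"
  using A
  apply (simp only: insert_iff empty_iff prod.inject simp_thms)
  apply (elim disjE conjE)
  by (hypsubst; cases eT; cases eM; cases eB; auto simp: segT_def segM_def segB_def)+

lemma filter_rev2: "B = [e1,e2] \<Longrightarrow> \<not> (P e1 \<and> P e2) \<Longrightarrow> filter P (rev B) = filter P B"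
  by auto

lemma disj7: "distinct (u@A1@v@A2@x@A3@y) \<Longrightarrow> set (A1@A2@A3) \<inter> set (u@v@x@y) = {}"
  by (simp add: Int_Un_distrib Int_Un_distrib2 Int_commute)

lemma R3_inv:
  assumes wf: "gauss_wf D" "gauss_wf D'" and st: "R3_step D D'"
  shows "a_inv xs D = a_inv xs D'"
proof -
  obtain u v x y A1 A2 A3 p q r eT eM eB where
    A: "(A1, A2, A3) \<in> {(segT eT p q, segM eM p r, segB eB q r), (segT eT p q, segB eB q r, segM eM p r),
              (segM eM p r, segT eT p q, segB eB q r), (segM eM p r, segB eB q r, segT eT p q),
              (segB eB q r, segT eT p q, segM eM p r), (segB eB q r, segM eM p r, segT eT p q)}"
    and wD: "fst D = u @ A1 @ v @ A2 @ x @ A3 @ y"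
    and wD': "fst D' = u @ rev A1 @ v @ rev A2 @ x @ rev A3 @ y"
    and sg: "snd D p * sgnb eT * sgnb eM = - snd D q * sgnb eT * sgnb eB"
            "- snd D q * sgnb eT * sgnb eB = snd D r * sgnb eM * sgnb eB"
    and ag: "agree (snd D) (snd D') (fst D)"
    using st unfolding R3_step_def Let_def by blast
  have dw: "distinct (fst D)" using wf_dist[OF wf(1)] .
  have dw': "distinct (fst D')" using wf_dist[OF wf(2)] .
  have dA: "distinct (A1@A2@A3)" using dw unfolding wD by auto
  note segs = R3_segs[OF A]
  have setA: "set A1 \<union> set A2 \<union> set A3 = {(p,True),(q,True),(p,False),(r,True),(r,False),(q,False)}"
    using segs by (rule conjunct1)
  have pqr: "p \<noteq> q \<and> p \<noteq> r \<and> q \<noteq> r" using segs[THEN conjunct2, THEN conjunct1] dA by (rule mp)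
  then have pqr: "p \<noteq> q" "p \<noteq> r" "q \<noteq> r" by simp_all
  note segs3 = segs[THEN conjunct2, THEN conjunct2]
  have segB: "\<exists>e1 e2. B = [e1,e2] \<and> fst e1 \<in> {p,q,r} \<and> fst e2 \<in> {p,q,r} \<and> fst e1 \<noteq> fst e2"
    if Bin: "B \<in> {A1,A2,A3}" for B
  proof -
    obtain e1 e2 where "B = [e1,e2]" "fst e1 \<in> {p,q,r}" "fst e2 \<in> {p,q,r}" "p\<noteq>q \<and> p\<noteq>r \<and> q\<noteq>r \<longrightarrow> fst e1 \<noteq> fst e2"
      using bspec[OF segs3 Bin] by blast
    then show ?thesis using pqr by blast
  qed
  have allA: "(c,b) \<in> set A1 \<union> set A2 \<union> set A3" if "c \<in> {p,q,r}" for c b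
    using setA that by (cases b) auto
  have lab: "labels D' = labels D" unfolding labels_def wD wD' by auto
  have sD: "snd D' c = snd D c" if "c \<in> labels D" for c
    using ag that unfolding agree_def labels_def by auto
  have pqrL: "c \<in> labels D" if "c \<in> {p,q,r}" for c
    using allA[OF that, of True] unfolding labels_def wD by force
  have ni: "fst e \<notin> {p,q,r}" if "e \<in> set (u @ v @ x @ y)" for e
  proof
    assume "fst e \<in> {p,q,r}"
    then have "e \<in> set A1 \<union> set A2 \<union> set A3" using allA[of "fst e" "snd e"] by simp
    then show False using disj7[OF dw[unfolded wD]] that by auto
  qed
  define P where "P = (\<lambda>e::nat\<times>bool. fst e \<in> {p,q,r})"
  have inA: "fst e \<in> {p,q,r}" if "e \<in> set A1 \<union> set A2 \<union> set A3" for e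
    using that unfolding setA by auto
  have PA: "filter P A1 = A1" "filter P A2 = A2" "filter P A3 = A3"
    by (rule filter_True; use inA in \<open>force simp: P_def\<close>)+
  have PA': "filter P (rev A1) = rev A1" "filter P (rev A2) = rev A2" "filter P (rev A3) = rev A3"
    using PA by (simp_all add: rev_filter[symmetric])
  have Pu: "filter P u = []" "filter P v = []" "filter P x = []" "filter P y = []"
    by (rule filter_False; use ni in \<open>force simp: P_def\<close>)+
  have fD: "filter P (fst D) = A1 @ A2 @ A3" unfolding wD using PA Pu by simp
  have fD': "filter P (fst D') = rev A1 @ rev A2 @ rev A3" unfolding wD' using PA' Pu by simp
  have memD: "(c,b) \<in> set (fst D)" "(c,b) \<in> set (fst D')" if "c \<in> labels D" for c b
    using wf_mem[OF wf(1) that] wf_mem[OF wf(2)] that lab by auto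
  have dA': "distinct (rev A1 @ rev A2 @ rev A3)" using dw' unfolding wD' by auto
  have kin: "kap (fst D) c d = kapl (A1 @ A2 @ A3) c d \<and> kap (fst D') c d = kapl (rev A1 @ rev A2 @ rev A3) c d"
    if "c \<in> {p,q,r}" "d \<in> {p,q,r}" "c \<noteq> d" for c d
  proof
    have "kap (fst D) c d = kap (filter P (fst D)) c d"
      by (rule kap_filter[symmetric]) (use that dw memD pqrL in \<open>auto simp: P_def\<close>)
    also have "\<dots> = kapl (A1 @ A2 @ A3) c d" unfolding fD
      by (rule kap_kapl[OF dA]) (use allA that in auto)
    finally show "kap (fst D) c d = kapl (A1 @ A2 @ A3) c d" .
    have "kap (fst D') c d = kap (filter P (fst D')) c d"
      by (rule kap_filter[symmetric]) (use that dw' memD pqrL in \<open>auto simp: P_def\<close>)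
    also have "\<dots> = kapl (rev A1 @ rev A2 @ rev A3) c d" unfolding fD'
      by (rule kap_kapl[OF dA']) (use allA that in auto)
    finally show "kap (fst D') c d = kapl (rev A1 @ rev A2 @ rev A3) c d" .
  qed
  have kout: "kap (fst D) c d = kap (fst D') c d"
    if "c \<in> labels D" "d \<in> labels D" "c \<noteq> d" "\<not> (c \<in> {p,q,r} \<and> d \<in> {p,q,r})" for c d
  proof -
    define Q where "Q = (\<lambda>e::nat\<times>bool. fst e \<in> {c,d})"
    have nb: "\<not> (Q e1 \<and> Q e2)" if "B \<in> {A1,A2,A3}" "B = [e1,e2]" "fst e1 \<in> {p,q,r}" "fst e2 \<in> {p,q,r}" "fst e1 \<noteq> fst e2" for B e1 e2
      using that \<open>\<not> (c \<in> {p,q,r} \<and> d \<in> {p,q,r})\<close> unfolding Q_def by auto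
    have fr: "filter Q (rev B) = filter Q B" if "B \<in> {A1,A2,A3}" for B
      using segB[OF that] nb[OF that] filter_rev2 by metis
    have "filter Q (fst D) = filter Q (fst D')" unfolding wD wD' using fr by simp
    moreover have "kap (fst D) c d = kap (filter Q (fst D)) c d"
      by (rule kap_filter[symmetric]) (use that dw memD in \<open>auto simp: Q_def\<close>)
    moreover have "kap (fst D') c d = kap (filter Q (fst D')) c d"
      by (rule kap_filter[symmetric]) (use that dw' memD in \<open>auto simp: Q_def\<close>)
    ultimately show ?thesis by simp
  qed
  have core: "(\<Sum>d\<in>{p,q,r} - {c}. kap (fst D) c d * snd D d) = (\<Sum>d\<in>{p,q,r} - {c}. kap (fst D') c d * snd D d)"
    if c: "c \<in> {p,q,r}" for c
  proof -
    note cr = R3_core[OF pqr A sg]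
    have e1: "{p,q,r} - {p} = {q,r}" "{p,q,r} - {q} = {p,r}" "{p,q,r} - {r} = {p,q}" using pqr by auto
    consider "c = p" | "c = q" | "c = r" using c by auto
    then show ?thesis
    proof cases
      case 1 then show ?thesis using cr pqr kin[of p q] kin[of p r] by (simp add: e1)
    next
      case 2 then show ?thesis using cr pqr kin[of q p] kin[of q r] by (simp add: e1)
    next
      case 3 then show ?thesis using cr pqr kin[of r p] kin[of r q] by (simp add: e1)
    qed
  qed
  have Ind: "Ind D c = Ind D' c" if c: "c \<in> labels D" for c
  proof (cases "c \<in> {p,q,r}")
    case False
    show ?thesis
      by (rule Ind_cong[OF wf lab[symmetric] c]) (use kout c False sD in auto)
  next
    case True
    have c': "c \<in> labels D'" using c lab by simp
    have spl: "labels D - {c} = ({p,q,r} - {c}) \<union> (labels D - {p,q,r})" using True pqrL c by auto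
    have fin: "finite ({p,q,r} - {c})" "finite (labels D - {p,q,r})" using finite_labels by auto
    have "Ind D c = (\<Sum>d\<in>{p,q,r} - {c}. kap (fst D) c d * snd D d) + (\<Sum>d\<in>labels D - {p,q,r}. kap (fst D) c d * snd D d)"
      unfolding Ind_kap[OF wf(1) c] spl by (rule sum.union_disjoint[OF fin]) auto
    also have "\<dots> = (\<Sum>d\<in>{p,q,r} - {c}. kap (fst D') c d * snd D' d) + (\<Sum>d\<in>labels D - {p,q,r}. kap (fst D') c d * snd D' d)"
    proof -
      have s1: "(\<Sum>d\<in>{p,q,r} - {c}. kap (fst D) c d * snd D d) = (\<Sum>d\<in>{p,q,r} - {c}. kap (fst D') c d * snd D' d)"
        unfolding core[OF True] using sD pqrL by (intro sum.cong) auto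
      have s2: "(\<Sum>d\<in>labels D - {p,q,r}. kap (fst D) c d * snd D d) = (\<Sum>d\<in>labels D - {p,q,r}. kap (fst D') c d * snd D' d)"
      proof (rule sum.cong[OF refl])
        fix d assume d: "d \<in> labels D - {p,q,r}"
        then have "d \<noteq> c" using True by auto
        then show "kap (fst D) c d * snd D d = kap (fst D') c d * snd D' d"
          using kout[OF c, of d] sD[of d] d by auto
      qed
      show ?thesis using s1 s2 by simp
    qed
    also have "\<dots> = Ind D' c"
      unfolding Ind_kap[OF wf(2) c'] lab spl by (rule sum.union_disjoint[symmetric, OF fin]) auto
    finally show ?thesis .
  qed
  show ?thesis by (rule a_inv_cong[OF lab[symmetric]]) (use Ind sD in auto)
qed


lemma cyc_rev: "t \<noteq> a \<Longrightarrow> a \<noteq> h \<Longrightarrow> t \<noteq> h \<Longrightarrow> cyc h a t = (\<not> cyc t a h)"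
  unfolding cyc_def by (cases "t<a"; cases "a<h"; cases "t<h") auto

lemma kapf_swap1: "distinct [t,h,a,b] \<Longrightarrow> kapf h t a b = - kapf t h a b"
proof -
  assume d: "distinct [t,h,a,b]"
  have "cyc h a t = (\<not> cyc t a h)" "cyc h b t = (\<not> cyc t b h)" using d cyc_rev[of t a h] cyc_rev[of t b h] by auto
  then show ?thesis unfolding kapf_def by auto
qed

lemma kapf_swap2: "kapf t h b a = - kapf t h a b"
  unfolding kapf_def by auto

definition flipset :: "gauss \<Rightarrow> nat set \<Rightarrow> nat set \<Rightarrow> nat set" where
  "flipset D S T = {i. i \<in> S \<and> snd D i \<noteq> (if i \<in> T then -1 else 1)}"

definition fsg :: "nat set \<Rightarrow> nat \<Rightarrow> int" where
  "fsg F i = (if i \<in> F then -1 else 1)"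

lemma resolve_fst: "fst (resolve D S T) = map (\<lambda>(i,b). if i \<in> flipset D S T then (i, \<not> b) else (i, b)) (fst D)"
  unfolding resolve_def flipset_def Let_def by simp

lemma resolve_labels: "labels (resolve D S T) = labels D"
  unfolding labels_def resolve_fst by force

lemma resolve_snd: "gauss_wf D \<Longrightarrow> c \<in> labels D \<Longrightarrow> snd (resolve D S T) c = fsg (flipset D S T) c * snd D c"
  using wf_sign[of D c] unfolding resolve_def flipset_def fsg_def Let_def by auto

lemma resolve_wf: assumes wf: "gauss_wf D" shows "gauss_wf (resolve D S T)"
proof -
  let ?F = "flipset D S T"
  let ?g = "\<lambda>(i,b). if i \<in> ?F then (i, \<not> b) else (i, b)"
  have inj: "inj ?g" unfolding inj_def by auto
  have d: "distinct (fst (resolve D S T))" unfolding resolve_fst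
    using wf_dist[OF wf] inj by (simp add: distinct_map inj_on_subset[OF inj])
  have m: "(i,b) \<in> set (fst (resolve D S T))" if "i \<in> labels D" for i b
  proof -
    have "(i, if i \<in> ?F then \<not> b else b) \<in> set (fst D)" using wf_mem[OF wf that] by blast
    then show ?thesis unfolding resolve_fst by (force simp: image_iff)
  qed
  have s: "snd (resolve D S T) i = 1 \<or> snd (resolve D S T) i = -1" if "i \<in> labels D" for i
    using resolve_snd[OF wf that, of S T] wf_sign[OF wf that] unfolding fsg_def by auto
  show ?thesis unfolding gauss_wf_def resolve_labels using d m s by auto
qed

lemma resolve_kap:
  assumes wf: "gauss_wf D" and c: "c \<in> labels D" and d: "d \<in> labels D" and cd: "c \<noteq> d"
  shows "kap (fst (resolve D S T)) c d = fsg (flipset D S T) c * fsg (flipset D S T) d * kap (fst D) c d"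
proof -
  let ?F = "flipset D S T"
  let ?g = "\<lambda>(i,b). if i \<in> ?F then (i, \<not> b) else (i, b)"
  let ?w = "fst D"
  have inj: "inj ?g" unfolding inj_def by auto
  have dw: "distinct ?w" using wf_dist[OF wf] .
  have pp: "pos (fst (resolve D S T)) (i,b) = pos ?w (i, if i \<in> ?F then \<not> b else b)" if "i \<in> labels D" for i b
  proof -
    have "?g (i, if i \<in> ?F then \<not> b else b) = (i,b)" by auto
    then have "pos (map ?g ?w) (i,b) = pos (map ?g ?w) (?g (i, if i \<in> ?F then \<not> b else b))" by simp
    also have "\<dots> = pos ?w (i, if i \<in> ?F then \<not> b else b)"
      by (rule pos_map[OF inj_on_subset[OF inj] dw]) (use wf_mem[OF wf that] in auto)
    finally show ?thesis unfolding resolve_fst .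
  qed
  have ne1: "pos ?w x \<noteq> pos ?w y" if "x \<in> set ?w" "y \<in> set ?w" "x \<noteq> y" for x y
    using pos_inj[OF dw] that by metis
  have m: "(c,True) \<in> set ?w" "(c,False) \<in> set ?w" "(d,True) \<in> set ?w" "(d,False) \<in> set ?w"
    using wf_mem[OF wf c] wf_mem[OF wf d] by auto
  have dist: "distinct [pos ?w (c,True), pos ?w (c,False), pos ?w (d,True), pos ?w (d,False)]"
    using ne1[OF m(1) m(2)] ne1[OF m(1) m(3)] ne1[OF m(1) m(4)] ne1[OF m(2) m(3)] ne1[OF m(2) m(4)] ne1[OF m(3) m(4)] cd
    by auto
  have dist2: "distinct [pos ?w (c,True), pos ?w (c,False), pos ?w (d,False), pos ?w (d,True)]"
    using dist by auto
  let ?cT = "pos ?w (c,True)" and ?cF = "pos ?w (c,False)" and ?dT = "pos ?w (d,True)" and ?dF = "pos ?w (d,False)"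
  have s1: "kapf ?cF ?cT ?dT ?dF = - kapf ?cT ?cF ?dT ?dF" using kapf_swap1[OF dist] .
  have s2: "kapf ?cT ?cF ?dF ?dT = - kapf ?cT ?cF ?dT ?dF" using kapf_swap2 .
  have s3: "kapf ?cF ?cT ?dF ?dT = kapf ?cT ?cF ?dT ?dF" using kapf_swap1[OF dist2] kapf_swap2[of ?cT ?cF ?dF ?dT] by simp
  show ?thesis unfolding kap_def pp[OF c] pp[OF d] fsg_def
    using s1 s2 s3 by (cases "c \<in> ?F"; cases "d \<in> ?F") simp_all
qed

lemma resolve_Ind:
  assumes wf: "gauss_wf D" and c: "c \<in> labels D"
  shows "Ind (resolve D S T) c = fsg (flipset D S T) c * Ind D c"
proof -
  let ?R = "resolve D S T" and ?f = "fsg (flipset D S T)"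
  have wf': "gauss_wf ?R" using resolve_wf[OF wf] .
  have c': "c \<in> labels ?R" using c resolve_labels by auto
  have ff: "?f d * ?f d = 1" for d unfolding fsg_def by auto
  have "Ind ?R c = (\<Sum>d\<in>labels D - {c}. kap (fst ?R) c d * snd ?R d)"
    using Ind_kap[OF wf' c'] resolve_labels by simp
  also have "\<dots> = (\<Sum>d\<in>labels D - {c}. ?f c * (kap (fst D) c d * snd D d))"
  proof (rule sum.cong[OF refl])
    fix d assume d: "d \<in> labels D - {c}"
    have "kap (fst ?R) c d * snd ?R d = ?f c * (?f d * ?f d) * kap (fst D) c d * snd D d"
      using resolve_kap[OF wf c, of d S T] resolve_snd[OF wf, of d S T] d by (simp add: algebra_simps)
    then show "kap (fst ?R) c d * snd ?R d = ?f c * (kap (fst D) c d * snd D d)" using ff[of d] by simp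
  qed
  also have "\<dots> = ?f c * Ind D c" using Ind_kap[OF wf c] by (simp add: sum_distrib_left)
  finally show ?thesis .
qed

definition Hf :: "int list \<Rightarrow> gauss \<Rightarrow> nat \<Rightarrow> nat \<Rightarrow> int \<Rightarrow> int" where
  "Hf xs D m c e = (if e * snd D c * Ind D c = xs ! m then e else 0)"

definition LL :: "int list \<Rightarrow> gauss \<Rightarrow> nat list set" where
  "LL xs D = {cs. set cs \<subseteq> labels D \<and> length cs = length xs}"

lemma finite_LL: "finite (LL xs D)"
  unfolding LL_def using finite_lists_length_eq[OF finite_labels] by simp

lemma ainv_resolve:
  assumes wf: "gauss_wf D"
  shows "a_inv xs (resolve D S T) = (\<Sum>cs\<in>LL xs D. \<Prod>m<length xs. Hf xs D m (cs!m) (snd (resolve D S T) (cs!m)))"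
proof -
  let ?R = "resolve D S T" and ?f = "fsg (flipset D S T)"
  have key: "Hf xs D m c (snd ?R c) = (if Ind ?R c = xs!m then snd ?R c else 0)" if c: "c \<in> labels D" for c m
  proof -
    have "snd ?R c * snd D c * Ind D c = ?f c * (snd D c * snd D c) * Ind D c"
      using resolve_snd[OF wf c] by (simp add: algebra_simps)
    also have "\<dots> = Ind ?R c" using wf_sign[OF wf c] resolve_Ind[OF wf c] by auto
    finally show ?thesis unfolding Hf_def by simp
  qed
  have sub: "chord_tuples xs ?R \<subseteq> LL xs D"
    unfolding chord_tuples_def LL_def resolve_labels by (auto simp: in_set_conv_nth)
  show ?thesis unfolding a_inv_def
  proof (rule sum.mono_neutral_cong_left[OF finite_LL sub])
    show "\<forall>cs\<in>LL xs D - chord_tuples xs ?R. (\<Prod>m<length xs. Hf xs D m (cs!m) (snd ?R (cs!m))) = 0"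
    proof
      fix cs assume cs: "cs \<in> LL xs D - chord_tuples xs ?R"
      then have len: "length cs = length xs" and sc: "\<And>m. m < length xs \<Longrightarrow> cs!m \<in> labels D"
        unfolding LL_def by auto
      obtain m where m: "m < length xs" "Ind ?R (cs!m) \<noteq> xs!m"
        using cs len sc unfolding chord_tuples_def resolve_labels by auto
      have "Hf xs D m (cs!m) (snd ?R (cs!m)) = 0" using key[OF sc[OF m(1)]] m by simp
      then show "(\<Prod>m<length xs. Hf xs D m (cs!m) (snd ?R (cs!m))) = 0"
        using m(1) by (intro prod_zero) auto
    qed
    show "(\<Prod>m<length xs. snd ?R (cs!m)) = (\<Prod>m<length xs. Hf xs D m (cs!m) (snd ?R (cs!m)))"
      if "cs \<in> chord_tuples xs ?R" for cs
      using that key unfolding chord_tuples_def resolve_labels by (intro prod.cong) auto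
  qed
qed


definition sgnc :: "nat set \<Rightarrow> int" where
  "sgnc T = (if even (card T) then 1 else -1)"

lemma sing_deriv_sgnc: "sing_deriv f D S = (\<Sum>T\<in>Pow S. of_int (sgnc T) * f (resolve D S T))"
  unfolding sing_deriv_def sgnc_def by (intro sum.cong) auto

lemma sgnc_insert: "finite T \<Longrightarrow> a \<notin> T \<Longrightarrow> sgnc (insert a T) = - sgnc T"
  unfolding sgnc_def by auto

lemma pow_split:
  fixes g :: "nat set \<Rightarrow> int"
  assumes fin: "finite S0" and a: "a \<notin> S0"
  shows "(\<Sum>T\<in>Pow (insert a S0). g T) = (\<Sum>T\<in>Pow S0. g T) + (\<Sum>T\<in>Pow S0. g (insert a T))"
proof -
  have disj: "Pow S0 \<inter> insert a ` Pow S0 = {}" using a by auto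
  have inj: "inj_on (insert a) (Pow S0)"
  proof (rule inj_onI)
    fix X Y assume "X \<in> Pow S0" "Y \<in> Pow S0" "insert a X = insert a Y"
    then show "X = Y" using a by (metis PowD insert_ident subsetD)
  qed
  have "(\<Sum>T\<in>Pow (insert a S0). g T) = (\<Sum>T\<in>Pow S0. g T) + (\<Sum>T\<in>insert a ` Pow S0. g T)"
    unfolding Pow_insert by (rule sum.union_disjoint) (use fin disj in auto)
  also have "(\<Sum>T\<in>insert a ` Pow S0. g T) = (\<Sum>T\<in>Pow S0. g (insert a T))"
    by (rule sum.reindex_cong[OF inj refl refl])
  finally show ?thesis .
qed

lemma pair_zero:
  fixes F :: "nat set \<Rightarrow> int"
  assumes fin: "finite S" and c0: "c0 \<in> S" and F: "\<And>T. T \<subseteq> S - {c0} \<Longrightarrow> F (insert c0 T) = F T"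
  shows "(\<Sum>T\<in>Pow S. sgnc T * F T) = 0"
proof -
  let ?S0 = "S - {c0}"
  have S: "S = insert c0 ?S0" using c0 by auto
  have fin0: "finite ?S0" using fin by simp
  have "(\<Sum>T\<in>Pow S. sgnc T * F T) = (\<Sum>T\<in>Pow ?S0. sgnc T * F T) + (\<Sum>T\<in>Pow ?S0. sgnc (insert c0 T) * F (insert c0 T))"
    by (subst S, rule pow_split[OF fin0]) simp
  also have "(\<Sum>T\<in>Pow ?S0. sgnc (insert c0 T) * F (insert c0 T)) = (\<Sum>T\<in>Pow ?S0. - (sgnc T * F T))"
  proof (rule sum.cong[OF refl])
    fix T assume T: "T \<in> Pow ?S0"
    then have "finite T" "c0 \<notin> T" using fin0 finite_subset by auto
    then show "sgnc (insert c0 T) * F (insert c0 T) = - (sgnc T * F T)" using sgnc_insert F T by simp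
  qed
  finally show ?thesis by (simp add: sum_negf)
qed

lemma multilin:
  fixes \<phi> :: "nat \<Rightarrow> bool \<Rightarrow> int"
  assumes "finite S"
  shows "(\<Sum>T\<in>Pow S. sgnc T * (\<Prod>c\<in>S. \<phi> c (c \<in> T))) = (\<Prod>c\<in>S. \<phi> c False - \<phi> c True)"
  using assms
proof (induction S rule: finite_induct)
  case empty
  then show ?case by (simp add: sgnc_def)
next
  case (insert a S)
  have p1: "(\<Prod>c\<in>insert a S. \<phi> c (c \<in> T)) = \<phi> a False * (\<Prod>c\<in>S. \<phi> c (c \<in> T))" if "T \<in> Pow S" for T
  proof -
    have "a \<notin> T" using that insert by auto
    then show ?thesis using insert by simp
  qed
  have p2: "(\<Prod>c\<in>insert a S. \<phi> c (c \<in> insert a T)) = \<phi> a True * (\<Prod>c\<in>S. \<phi> c (c \<in> T))" if "T \<in> Pow S" for T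
  proof -
    have "(\<Prod>c\<in>S. \<phi> c (c \<in> insert a T)) = (\<Prod>c\<in>S. \<phi> c (c \<in> T))"
    proof (rule prod.cong[OF refl])
      fix c assume "c \<in> S"
      then have "c \<noteq> a" using insert by auto
      then show "\<phi> c (c \<in> insert a T) = \<phi> c (c \<in> T)" by simp
    qed
    then show ?thesis using insert by simp
  qed
  have "(\<Sum>T\<in>Pow (insert a S). sgnc T * (\<Prod>c\<in>insert a S. \<phi> c (c \<in> T)))
     = (\<Sum>T\<in>Pow S. sgnc T * (\<Prod>c\<in>insert a S. \<phi> c (c \<in> T))) + (\<Sum>T\<in>Pow S. sgnc (insert a T) * (\<Prod>c\<in>insert a S. \<phi> c (c \<in> insert a T)))"
    by (rule pow_split) (use insert in auto)
  also have "\<dots> = (\<Sum>T\<in>Pow S. \<phi> a False * (sgnc T * (\<Prod>c\<in>S. \<phi> c (c \<in> T)))) + (\<Sum>T\<in>Pow S. - \<phi> a True * (sgnc T * (\<Prod>c\<in>S. \<phi> c (c \<in> T))))"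
  proof -
    have "(\<Sum>T\<in>Pow S. sgnc T * (\<Prod>c\<in>insert a S. \<phi> c (c \<in> T))) = (\<Sum>T\<in>Pow S. \<phi> a False * (sgnc T * (\<Prod>c\<in>S. \<phi> c (c \<in> T))))"
      using p1 by (intro sum.cong) auto
    moreover have "(\<Sum>T\<in>Pow S. sgnc (insert a T) * (\<Prod>c\<in>insert a S. \<phi> c (c \<in> insert a T))) = (\<Sum>T\<in>Pow S. - \<phi> a True * (sgnc T * (\<Prod>c\<in>S. \<phi> c (c \<in> T))))"
    proof (rule sum.cong[OF refl])
      fix T assume T: "T \<in> Pow S"
      then have "finite T" "a \<notin> T" using insert finite_subset by auto
      then show "sgnc (insert a T) * (\<Prod>c\<in>insert a S. \<phi> c (c \<in> insert a T)) = - \<phi> a True * (sgnc T * (\<Prod>c\<in>S. \<phi> c (c \<in> T)))"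
        using sgnc_insert p2[OF T] by simp
    qed
    ultimately show ?thesis by simp
  qed
  also have "\<dots> = (\<phi> a False - \<phi> a True) * (\<Sum>T\<in>Pow S. sgnc T * (\<Prod>c\<in>S. \<phi> c (c \<in> T)))"
    by (simp only: sum_distrib_left[symmetric]) (simp add: algebra_simps)
  also have "\<dots> = (\<Prod>c\<in>insert a S. \<phi> c False - \<phi> c True)" using insert by simp
  finally show ?case .
qed


lemma resolve_snd_def: "snd (resolve D S T) c = (if c \<in> S then (if c \<in> T then -1 else 1) else snd D c)"
  unfolding resolve_def Let_def by simp

definition Gf :: "int list \<Rightarrow> gauss \<Rightarrow> nat set \<Rightarrow> nat list \<Rightarrow> int" where
  "Gf xs D S cs = (\<Sum>T\<in>Pow S. sgnc T * (\<Prod>m<length xs. Hf xs D m (cs!m) (snd (resolve D S T) (cs!m))))"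

lemma sd_formula:
  assumes wf: "gauss_wf D"
  shows "sing_deriv (a_inv xs) D S = (\<Sum>cs\<in>LL xs D. Gf xs D S cs)"
proof -
  have "sing_deriv (a_inv xs) D S = (\<Sum>T\<in>Pow S. sgnc T * (\<Sum>cs\<in>LL xs D. \<Prod>m<length xs. Hf xs D m (cs!m) (snd (resolve D S T) (cs!m))))"
    unfolding sing_deriv_sgnc ainv_resolve[OF wf] by simp
  also have "\<dots> = (\<Sum>T\<in>Pow S. \<Sum>cs\<in>LL xs D. sgnc T * (\<Prod>m<length xs. Hf xs D m (cs!m) (snd (resolve D S T) (cs!m))))"
    by (simp add: sum_distrib_left)
  also have "\<dots> = (\<Sum>cs\<in>LL xs D. Gf xs D S cs)"
    unfolding Gf_def by (rule sum.swap)
  finally show ?thesis .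
qed

lemma Gf_zero:
  assumes fin: "finite S" and c0: "c0 \<in> S" "c0 \<notin> set cs" and len: "length cs = length xs"
  shows "Gf xs D S cs = 0"
  unfolding Gf_def
proof (rule pair_zero[OF fin c0(1)])
  fix T assume T: "T \<subseteq> S - {c0}"
  show "(\<Prod>m<length xs. Hf xs D m (cs!m) (snd (resolve D S (insert c0 T)) (cs!m))) =
        (\<Prod>m<length xs. Hf xs D m (cs!m) (snd (resolve D S T) (cs!m)))"
  proof (rule prod.cong[OF refl])
    fix m assume m: "m \<in> {..<length xs}"
    then have "cs!m \<noteq> c0" using c0(2) len by (metis lessThan_iff nth_mem)
    then show "Hf xs D m (cs!m) (snd (resolve D S (insert c0 T)) (cs!m)) = Hf xs D m (cs!m) (snd (resolve D S T) (cs!m))"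
      unfolding resolve_snd_def by simp
  qed
qed

lemma Gf_distinct:
  assumes d: "distinct cs" and S: "set cs = S" and len: "length cs = length xs"
  shows "Gf xs D S cs = (\<Prod>m<length xs. Hf xs D m (cs!m) 1 - Hf xs D m (cs!m) (-1))"
proof -
  let ?n = "length xs"
  have bij: "bij_betw ((!) cs) {..<?n} S" using bij_betw_nth[OF d] len S by simp
  have inj: "inj_on ((!) cs) {..<?n}" using bij bij_betw_def by blast
  define idx where "idx = the_inv_into {..<?n} ((!) cs)"
  have idx: "idx (cs!m) = m" if "m < ?n" for m
    unfolding idx_def using the_inv_into_f_f[OF inj] that by simp
  define \<phi> where "\<phi> = (\<lambda>c b. Hf xs D (idx c) c (if b then -1 else 1))"
  have fin: "finite S" using S by auto
  have e1: "(\<Prod>m<?n. Hf xs D m (cs!m) (snd (resolve D S T) (cs!m))) = (\<Prod>c\<in>S. \<phi> c (c \<in> T))" for T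
  proof -
    have "(\<Prod>m<?n. Hf xs D m (cs!m) (snd (resolve D S T) (cs!m))) = (\<Prod>m<?n. \<phi> (cs!m) (cs!m \<in> T))"
    proof (rule prod.cong[OF refl])
      fix m assume m: "m \<in> {..<?n}"
      then have "cs!m \<in> S" using S len by auto
      then show "Hf xs D m (cs!m) (snd (resolve D S T) (cs!m)) = \<phi> (cs!m) (cs!m \<in> T)"
        unfolding \<phi>_def resolve_snd_def using idx m by simp
    qed
    also have "\<dots> = (\<Prod>c\<in>S. \<phi> c (c \<in> T))" by (rule prod.reindex_bij_betw[OF bij])
    finally show ?thesis .
  qed
  have "Gf xs D S cs = (\<Sum>T\<in>Pow S. sgnc T * (\<Prod>c\<in>S. \<phi> c (c \<in> T)))" unfolding Gf_def e1 ..
  also have "\<dots> = (\<Prod>c\<in>S. \<phi> c False - \<phi> c True)" by (rule multilin[OF fin])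
  also have "\<dots> = (\<Prod>m<?n. \<phi> (cs!m) False - \<phi> (cs!m) True)" by (rule prod.reindex_bij_betw[OF bij, symmetric])
  also have "\<dots> = (\<Prod>m<?n. Hf xs D m (cs!m) 1 - Hf xs D m (cs!m) (-1))"
    unfolding \<phi>_def using idx by (intro prod.cong) auto
  finally show ?thesis .
qed

lemma Hf_diff_nonneg: "Hf xs D m c 1 - Hf xs D m c (-1) \<ge> 0"
  unfolding Hf_def by auto

lemma Hf_diff_ge1: "snd D c * Ind D c = xs ! m \<Longrightarrow> Hf xs D m c 1 - Hf xs D m c (-1) \<ge> 1"
  unfolding Hf_def by auto

lemma partA:
  assumes wf: "gauss_wf D" and S: "S \<subseteq> labels D" and card: "card S = length xs + 1"
  shows "sing_deriv (a_inv xs) D S = 0"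
proof -
  have fin: "finite S" using S finite_labels finite_subset by blast
  have "Gf xs D S cs = 0" if cs: "cs \<in> LL xs D" for cs
  proof -
    have len: "length cs = length xs" using cs unfolding LL_def by auto
    have "card (set cs) \<le> length xs" using card_length len by metis
    then have "\<not> S \<subseteq> set cs" using card card_mono[of "set cs" S] by auto
    then obtain c0 where "c0 \<in> S" "c0 \<notin> set cs" by auto
    then show ?thesis using Gf_zero[OF fin _ _ len] by blast
  qed
  then show ?thesis unfolding sd_formula[OF wf] by simp
qed

lemma partB:
  assumes wf: "gauss_wf D" and d: "distinct cs0" and sub: "set cs0 \<subseteq> labels D" and len: "length cs0 = length xs"
    and val: "\<And>m. m < length xs \<Longrightarrow> snd D (cs0!m) * Ind D (cs0!m) = xs!m"
  shows "sing_deriv (a_inv xs) D (set cs0) \<noteq> 0"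
proof -
  let ?S = "set cs0"
  have fin: "finite ?S" by simp
  have card: "card ?S = length xs" using distinct_card[OF d] len by simp
  have nn: "Gf xs D ?S cs \<ge> 0" if cs: "cs \<in> LL xs D" for cs
  proof (cases "?S \<subseteq> set cs")
    case False
    then obtain c0 where "c0 \<in> ?S" "c0 \<notin> set cs" by auto
    then show ?thesis using Gf_zero[OF fin] cs unfolding LL_def by auto
  next
    case True
    have lenc: "length cs = length xs" using cs unfolding LL_def by auto
    have "card (set cs) \<le> length xs" using card_length lenc by metis
    moreover have "card ?S \<le> card (set cs)" using True by (simp add: card_mono)
    ultimately have "?S = set cs" using card True by (intro card_subset_eq) auto
    then have eq: "set cs = ?S" by simp
    then have "card (set cs) = length cs" using card lenc by simp
    then have dc: "distinct cs" by (rule card_distinct)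
    show ?thesis unfolding Gf_distinct[OF dc eq lenc] by (rule prod_nonneg) (use Hf_diff_nonneg in auto)
  qed
  have cs0: "cs0 \<in> LL xs D" unfolding LL_def using sub len by auto
  have g1: "Gf xs D ?S cs0 \<ge> 1"
    unfolding Gf_distinct[OF d refl len] by (rule prod_ge_1) (use Hf_diff_ge1 val in auto)
  have "Gf xs D ?S cs0 \<le> (\<Sum>cs\<in>LL xs D. Gf xs D ?S cs)"
    by (rule member_le_sum[OF cs0]) (use nn finite_LL in auto)
  then show ?thesis unfolding sd_formula[OF wf] using g1 by simp
qed


lemma kapf_below: "a < t \<Longrightarrow> a < h \<Longrightarrow> b < t \<Longrightarrow> b < h \<Longrightarrow> kapf t h a b = 0"
  unfolding kapf_def cyc_def by auto

lemma kapf_above: "t < a \<Longrightarrow> h < a \<Longrightarrow> t < b \<Longrightarrow> h < b \<Longrightarrow> kapf t h a b = 0"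
  unfolding kapf_def cyc_def by auto

lemma block_step:
  assumes wf: "gauss_wf D" and N: "\<And>i. i \<in> labels D \<Longrightarrow> i < N"
  fixes y :: int
  defines "k \<equiv> nat \<bar>y\<bar>"
  defines "L1 \<equiv> map (\<lambda>j. (N+1+j, True)) [0..<k]" and "L2 \<equiv> map (\<lambda>j. (N+1+j, False)) [0..<k]"
  defines "B \<equiv> (N,True) # L1 @ (N,False) # L2"
  defines "sa \<equiv> (if y > 0 then -1 else 1 :: int)"
  defines "Aux \<equiv> (\<lambda>j. N+1+j) ` {..<k}"
  defines "D' \<equiv> (B @ fst D, \<lambda>i. if i = N then 1 else if i \<in> Aux then sa else snd D i)"
  shows "\<exists>E. gauss_wf E \<and> N \<in> labels E \<and> labels D \<subseteq> labels E \<and> snd E N * Ind E N = y \<and>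
    (\<forall>c\<in>labels D. snd E c = snd D c \<and> Ind E c = Ind D c)"
proof -
  let ?w = "B @ fst D"
  have setL1: "set L1 = {(i,True) | i. i \<in> Aux}" unfolding L1_def Aux_def by auto
  have setL2: "set L2 = {(i,False) | i. i \<in> Aux}" unfolding L2_def Aux_def by auto
  have setB: "set B = {(i,b) | i b. i = N \<or> i \<in> Aux}" unfolding B_def by (auto simp: setL1 setL2)
  have dL1: "distinct L1" "distinct L2" unfolding L1_def L2_def by (auto simp: distinct_map inj_on_def)
  have NA: "N \<notin> Aux" unfolding Aux_def by auto
  have dB: "distinct B" unfolding B_def using dL1 setL1 setL2 NA by auto
  have dD: "distinct (fst D)" using wf_dist[OF wf] .
  have labD: "fst e \<in> labels D" if "e \<in> set (fst D)" for e using that unfolding labels_def by auto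
  have disj: "set B \<inter> set (fst D) = {}"
  proof -
    have "fst e < N" if "e \<in> set (fst D)" for e using N labD that by auto
    then show ?thesis unfolding setB Aux_def by force
  qed
  have dw: "distinct ?w" using dB dD disj by simp
  have labD': "labels D' = insert N Aux \<union> labels D" unfolding D'_def labels_def using setB by force
  have wf': "gauss_wf D'"
    unfolding gauss_wf_def
  proof (intro conjI ballI)
    show "distinct (fst D')" using dw unfolding D'_def by simp
  next
    fix i assume i0: "i \<in> labels D'"
    then have i: "i = N \<or> i \<in> Aux \<or> i \<in> labels D" using labD' by auto
    show "(i, True) \<in> set (fst D')" "(i, False) \<in> set (fst D')"
      using i wf_mem[OF wf, of i] unfolding D'_def by (auto simp: setB)
    have "i \<in> labels D \<Longrightarrow> i \<notin> Aux \<and> i \<noteq> N" using N unfolding Aux_def by force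
    then show "snd D' i = 1 \<or> snd D' i = -1"
      using i wf_sign[OF wf, of i] unfolding D'_def sa_def by auto
  qed
  have NAD: "N \<notin> labels D" "\<And>i. i \<in> Aux \<Longrightarrow> i \<notin> labels D" using N unfolding Aux_def by force+
  have sD: "snd D' c = snd D c" if "c \<in> labels D" for c
    using NAD that unfolding D'_def by auto
  have memw: "(c,b) \<in> set ?w" if "c \<in> labels D'" for c b using wf_mem[OF wf'] that unfolding D'_def by auto
  have posD: "pos ?w (c,b) \<ge> length B" if "c \<in> labels D" for c b
    using pos_append2[OF dw, of "(c,b)"] wf_mem[OF wf that] by simp
  have posB: "pos ?w (c,b) < length B" if "c \<in> insert N Aux" for c b
  proof -
    have "(c,b) \<in> set B" using that setB by auto
    then show ?thesis using pos_append1[OF dw] pos_in[OF dB] by simp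
  qed
  have fw: "filter (\<lambda>e. fst e \<in> labels D) ?w = fst D"
  proof -
    have "filter (\<lambda>e. fst e \<in> labels D) B = []" using NAD unfolding setB[symmetric] filter_empty_conv
      by (force simp: setB)
    moreover have "filter (\<lambda>e. fst e \<in> labels D) (fst D) = fst D" using labD by (simp add: filter_True)
    ultimately show ?thesis by simp
  qed
  have kold: "kap ?w c d = kap (fst D) c d" if "c \<in> labels D" "d \<in> labels D" "c \<noteq> d" for c d
  proof -
    have "kap (filter (\<lambda>e. fst e \<in> labels D) ?w) c d = kap ?w c d"
      by (rule kap_filter[OF dw]) (use that memw labD' in auto)
    then show ?thesis unfolding fw by simp
  qed
  have kblk: "kap ?w c d = 0" if "c \<in> labels D" "d \<in> insert N Aux" for c d
    unfolding kap_def using posD[OF that(1), of True] posD[OF that(1), of False] posB[OF that(2), of True] posB[OF that(2), of False]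
    by (intro kapf_below) linarith+
  have kN: "kap ?w N d = 0" if "d \<in> labels D" for d
    unfolding kap_def using posD[OF that, of True] posD[OF that, of False] posB[of N True] posB[of N False]
    by (intro kapf_above) auto
  have lenB: "length B = Suc (Suc (k + k))" unfolding B_def L1_def L2_def by simp
  have nthB: "?w ! 0 = (N,True)" "?w ! Suc k = (N,False)"
     "\<And>j. j < k \<Longrightarrow> ?w ! Suc j = (N+1+j,True)" "\<And>j. j < k \<Longrightarrow> ?w ! Suc (Suc (k + j)) = (N+1+j,False)"
    unfolding B_def L1_def L2_def by (simp_all add: nth_append)
  have lw: "length ?w \<ge> Suc (Suc (k + k))" using lenB by simp
  have pN: "pos ?w (N,True) = 0" "pos ?w (N,False) = Suc k"
    using pos_nth[OF dw, of 0] pos_nth[OF dw, of "Suc k"] nthB lw lenB by auto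
  have pA: "pos ?w (N+1+j,True) = Suc j" "pos ?w (N+1+j,False) = Suc (Suc (k + j))" if "j < k" for j
    using pos_nth[OF dw, of "Suc j"] pos_nth[OF dw, of "Suc (Suc (k + j))"] nthB(3,4)[OF that] lw that by auto
  have kA: "kap ?w N (N+1+j) = -1" if "j < k" for j
    unfolding kap_def pN pA[OF that] using that by (simp add: kapf_def cyc_def)
  have D'w: "fst D' = ?w" unfolding D'_def by simp
  have N': "N \<in> labels D'" using labD' by auto
  have IndN: "Ind D' N = y"
  proof -
    have e: "labels D' - {N} = Aux \<union> labels D" using labD' NAD unfolding Aux_def by auto
    have fin: "finite Aux" unfolding Aux_def by simp
    have dj: "Aux \<inter> labels D = {}" using NAD by auto
    have "Ind D' N = (\<Sum>d\<in>Aux. kap ?w N d * snd D' d) + (\<Sum>d\<in>labels D. kap ?w N d * snd D' d)"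
      unfolding Ind_kap[OF wf' N'] e D'w by (rule sum.union_disjoint[OF fin finite_labels dj])
    also have "(\<Sum>d\<in>labels D. kap ?w N d * snd D' d) = 0" using kN by simp
    also have "(\<Sum>d\<in>Aux. kap ?w N d * snd D' d) = (\<Sum>j<k. kap ?w N (N+1+j) * snd D' (N+1+j))"
      unfolding Aux_def by (rule sum.reindex_cong[of "\<lambda>j. N+1+j"]) (auto simp: inj_on_def)
    also have "\<dots> = (\<Sum>j<k. - sa)"
    proof (rule sum.cong[OF refl])
      fix j assume j: "j \<in> {..<k}"
      then have "N+1+j \<in> Aux" "N+1+j \<noteq> N" unfolding Aux_def by auto
      then show "kap ?w N (N+1+j) * snd D' (N+1+j) = - sa" using kA j unfolding D'_def by simp
    qed
    also have "\<dots> = - (int k * sa)" by simp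
    also have "\<dots> = y" unfolding k_def sa_def by auto
    finally show ?thesis by simp
  qed
  have sN: "snd D' N = 1" unfolding D'_def by simp
  have IndOld: "Ind D' c = Ind D c" if c: "c \<in> labels D" for c
  proof -
    have c': "c \<in> labels D'" using c labD' by auto
    have e: "labels D' - {c} = (labels D - {c}) \<union> insert N Aux" using labD' c NAD by auto
    have fin: "finite (insert N Aux)" unfolding Aux_def by simp
    have dj: "(labels D - {c}) \<inter> insert N Aux = {}" using NAD by auto
    have "Ind D' c = (\<Sum>d\<in>labels D - {c}. kap ?w c d * snd D' d) + (\<Sum>d\<in>insert N Aux. kap ?w c d * snd D' d)"
      unfolding Ind_kap[OF wf' c'] e D'w by (rule sum.union_disjoint) (use fin dj finite_labels in auto)
    also have "(\<Sum>d\<in>insert N Aux. kap ?w c d * snd D' d) = 0" using kblk[OF c] by simp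
    also have "(\<Sum>d\<in>labels D - {c}. kap ?w c d * snd D' d) = (\<Sum>d\<in>labels D - {c}. kap (fst D) c d * snd D d)"
      using kold[OF c] sD by (intro sum.cong) auto
    finally show ?thesis using Ind_kap[OF wf c] by simp
  qed
  show ?thesis by (rule exI[of _ D']) (use wf' N' labD' IndN sN IndOld sD in auto)
qed


lemma construct: "\<exists>D cs. gauss_wf D \<and> distinct cs \<and> set cs \<subseteq> labels D \<and> length cs = length ys \<and>
   (\<forall>m<length ys. snd D (cs!m) * Ind D (cs!m) = ys!m)"
proof (induction ys)
  case Nil
  have "gauss_wf ([], \<lambda>_. 1)" unfolding gauss_wf_def labels_def by simp
  then show ?case by (intro exI[of _ "([], \<lambda>_. 1)"] exI[of _ "[]"]) simp
next
  case (Cons y ys)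
  then obtain D cs where wf: "gauss_wf D" and d: "distinct cs" and sub: "set cs \<subseteq> labels D"
    and len: "length cs = length ys" and val: "\<forall>m<length ys. snd D (cs!m) * Ind D (cs!m) = ys!m" by blast
  define N where "N = Suc (Max (insert 0 (labels D)))"
  have Nlt: "i < N" if "i \<in> labels D" for i
    unfolding N_def using that finite_labels[of D] by (simp add: le_imp_less_Suc)
  have "\<exists>D'. gauss_wf D' \<and> N \<in> labels D' \<and> labels D \<subseteq> labels D' \<and> snd D' N * Ind D' N = y \<and>
    (\<forall>c\<in>labels D. snd D' c = snd D c \<and> Ind D' c = Ind D c)"
    by (rule block_step[OF wf Nlt, of y])
  then obtain D' where P: "gauss_wf D' \<and> N \<in> labels D' \<and> labels D \<subseteq> labels D' \<and> snd D' N * Ind D' N = y \<and>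
    (\<forall>c\<in>labels D. snd D' c = snd D c \<and> Ind D' c = Ind D c)" by (rule exE)
  have wf': "gauss_wf D'" and N': "N \<in> labels D'" and sl: "labels D \<subseteq> labels D'"
    and vN: "snd D' N * Ind D' N = y" and old: "\<forall>c\<in>labels D. snd D' c = snd D c \<and> Ind D' c = Ind D c"
    using P by simp_all
  have NN: "N \<notin> set cs" using sub Nlt by blast
  show ?case
  proof (intro exI[of _ D'] exI[of _ "N # cs"] conjI allI impI)
    show "gauss_wf D'" by fact
    show "distinct (N # cs)" using d NN by simp
    show "set (N # cs) \<subseteq> labels D'" using N' sub sl by auto
    show "length (N # cs) = length (y # ys)" using len by simp
    fix m assume m: "m < length (y # ys)"
    show "snd D' ((N # cs) ! m) * Ind D' ((N # cs) ! m) = (y # ys) ! m"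
    proof (cases m)
      case 0 then show ?thesis using vN by simp
    next
      case (Suc m')
      then have m': "m' < length ys" using m by simp
      then have "cs ! m' \<in> set cs" using len by simp
      then have "cs ! m' \<in> labels D" using sub by (rule subsetD[rotated])
      then show ?thesis using Suc old val m' by simp
    qed
  qed
qed

lemma sorted_gt_distinct: "sorted_wrt (>) (xs :: int list) \<Longrightarrow> distinct xs"
  by (induction xs) auto

theorem theorem3p7:
  fixes xs :: "int list"
  assumes "length xs \<ge> 1"
    and "sorted_wrt (>) xs"
    and "0 \<notin> set xs"
  shows "knot_invariant (a_inv xs) \<and> finite_type_degree (a_inv xs) (length xs)"
proof
  have dxs: "distinct xs" using sorted_gt_distinct assms(2) by blast
  show "knot_invariant (a_inv xs)"
    unfolding knot_invariant_def
  proof (intro allI impI)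
    fix D D' assume wf: "gauss_wf D" "gauss_wf D'" and st: "gstep D D'"
    have "rot_step D D' \<or> relabel_step D D' \<or> R1_step D D' \<or> R2_step D D' \<or> R3_step D D'"
      using st unfolding gstep_def .
    then show "a_inv xs D = a_inv xs D'"
    proof (elim disjE)
      assume "rot_step D D'" then show ?thesis by (rule rot_inv[OF wf])
    next
      assume "relabel_step D D'" then show ?thesis by (rule relabel_inv[OF wf])
    next
      assume "R1_step D D'" then show ?thesis by (rule R1_inv[OF wf _ assms(3)])
    next
      assume "R2_step D D'" then show ?thesis by (rule R2_inv[OF wf _ dxs])
    next
      assume "R3_step D D'" then show ?thesis by (rule R3_inv[OF wf])
    qed
  qed
  show "finite_type_degree (a_inv xs) (length xs)"
    unfolding finite_type_degree_def
  proof (intro conjI allI impI)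
    fix D S assume "gauss_wf D" "S \<subseteq> labels D" "card S = length xs + 1"
    then show "sing_deriv (a_inv xs) D S = 0" by (rule partA)
  next
    obtain D cs where wf: "gauss_wf D" and d: "distinct cs" and sub: "set cs \<subseteq> labels D"
      and len: "length cs = length xs" and val: "\<forall>m<length xs. snd D (cs!m) * Ind D (cs!m) = xs!m"
      using construct[of xs] by blast
    have "sing_deriv (a_inv xs) D (set cs) \<noteq> 0" using partB[OF wf d sub len] val by blast
    moreover have "card (set cs) = length xs" using distinct_card[OF d] len by simp
    ultimately show "\<exists>D S. gauss_wf D \<and> S \<subseteq> labels D \<and> card S = length xs \<and> sing_deriv (a_inv xs) D S \<noteq> 0"
      using wf sub by blast
  qed
qed


end
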